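(* Consider the multi-sender unicast index-coding instance with $N=5$ messages, $K=4$ senders with $\mathcal S_1=\{1,2,3\}$, $\mathcal S_2=\{2,3,4\}$, $\mathcal S_3=\{1,2\}$, $\mathcal S_4=\{2,4,5\}$, each with link capacity $C_k=1$, and receiver side information $\mathcal A_1=\{4,5\}$, $\mathcal A_2=\{1,3,5\}$, $\mathcal A_3=\{1,2\}$, $\mathcal A_4=\{2,3,5\}$, $\mathcal A_5=\{3\}$. Its capacity region is $$\mathcal C=\left\{(R_1,\dots,R_5)\in\mathbb R_+^5:\begin{array}{l}R_1\le2,\ R_3\le2,\ R_5\le1,\ R_1+R_3\le3,\ R_4+R_5\le2,\\ R_1+R_2+R_5\le4,\ R_2+R_4+R_5\le4,\ R_3+R_4+R_5\le3\end{array}\right\}.$$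
   Context: Model. $N$ independent messages $M_1,\dots,M_N$, $M_j$ uniform on $[1:2^{nR_j}]$ ($n$ the block length). Sender $k$ knows the messages $M_i$, $i\in\mathcal S_k$, and sends an index $L_k=f_k((M_i)_{i\in\mathcal S_k})\in[1:2^{nC_k})=\{1,\dots,2^{\lfloor nC_k\rfloor}\}$ over a noiseless broadcast link reaching all receivers. Receiver $j$ knows $M_i$, $i\in\mathcal A_j$, and must output an estimate $\hat M_j=g_j(L_1,\dots,L_K,(M_i)_{i\in\mathcal A_j})$ of $M_j$. A rate tuple is achievable if there exist such codes with $\Pr[(\hat M_1,\dots,\hat M_N)\ne(M_1,\dots,M_N)]\to0$ as $n\to\infty$; the capacity region $\mathcal C$ is the closure of the set of achievable rate tuples. *)

theory Defs
  imports "HOL-Analysis.Analysis"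
begin

text \<open>Messages are indexed by 1..N, senders by 1..K.
  A rate tuple is a function R :: nat => real, supported on 1..N.\<close>

definition msg_set :: "nat \<Rightarrow> nat \<Rightarrow> (nat \<Rightarrow> real) \<Rightarrow> (nat \<Rightarrow> nat) set" where
  "msg_set N n R = {m. (\<forall>j\<in>{1..N}. m j < 2 ^ nat \<lfloor>real n * R j\<rfloor>) \<and> (\<forall>j. j \<notin> {1..N} \<longrightarrow> m j = 0)}"

text \<open>f k : encoder of sender k (depends only on messages in S k);
  g j : decoder of receiver j, applied to the broadcast indices (L_1..L_K) and the message tuple,
  depending only on L_1..L_K and on the messages in A j.\<close>
definition valid_code ::
  "nat \<Rightarrow> nat \<Rightarrow> (nat \<Rightarrow> nat set) \<Rightarrow> (nat \<Rightarrow> real) \<Rightarrow> (nat \<Rightarrow> nat set) \<Rightarrow> nat \<Rightarrow> (nat \<Rightarrow> real)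
   \<Rightarrow> (nat \<Rightarrow> (nat \<Rightarrow> nat) \<Rightarrow> nat) \<Rightarrow> (nat \<Rightarrow> (nat \<Rightarrow> nat) \<Rightarrow> (nat \<Rightarrow> nat) \<Rightarrow> nat) \<Rightarrow> bool" where
  "valid_code N K S C A n R f g \<longleftrightarrow>
     (\<forall>k\<in>{1..K}. \<forall>m m'. (\<forall>i\<in>S k. m i = m' i) \<longrightarrow> f k m = f k m') \<and>
     (\<forall>k\<in>{1..K}. \<forall>m\<in>msg_set N n R. f k m < 2 ^ nat \<lfloor>real n * C k\<rfloor>) \<and>
     (\<forall>j\<in>{1..N}. \<forall>l l' m m'. (\<forall>k\<in>{1..K}. l k = l' k) \<and> (\<forall>i\<in>A j. m i = m' i)
          \<longrightarrow> g j l m = g j l' m')"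

text \<open>Error probability for independent uniform messages: fraction of message tuples
  for which some receiver decodes wrongly.\<close>
definition err_prob ::
  "nat \<Rightarrow> nat \<Rightarrow> (nat \<Rightarrow> real)
   \<Rightarrow> (nat \<Rightarrow> (nat \<Rightarrow> nat) \<Rightarrow> nat) \<Rightarrow> (nat \<Rightarrow> (nat \<Rightarrow> nat) \<Rightarrow> (nat \<Rightarrow> nat) \<Rightarrow> nat) \<Rightarrow> real" where
  "err_prob N n R f g =
     real (card {m \<in> msg_set N n R. \<exists>j\<in>{1..N}. g j (\<lambda>k. f k m) m \<noteq> m j})
       / real (card (msg_set N n R))"

definition achievable ::
  "nat \<Rightarrow> nat \<Rightarrow> (nat \<Rightarrow> nat set) \<Rightarrow> (nat \<Rightarrow> real) \<Rightarrow> (nat \<Rightarrow> nat set) \<Rightarrow> (nat \<Rightarrow> real) \<Rightarrow> bool" where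
  "achievable N K S C A R \<longleftrightarrow>
     (\<forall>j. 0 \<le> R j) \<and> (\<forall>j. j \<notin> {1..N} \<longrightarrow> R j = 0) \<and>
     (\<exists>f g. (\<forall>n. valid_code N K S C A n R (f n) (g n)) \<and>
            (\<lambda>n. err_prob N n R (f n) (g n)) \<longlonglongrightarrow> 0)"

text \<open>Capacity region: closure (product topology on nat => real, i.e. the usual topology on
  the N coordinates, all others being 0) of the set of achievable rate tuples.\<close>
definition capacity_region ::
  "nat \<Rightarrow> nat \<Rightarrow> (nat \<Rightarrow> nat set) \<Rightarrow> (nat \<Rightarrow> real) \<Rightarrow> (nat \<Rightarrow> nat set) \<Rightarrow> (nat \<Rightarrow> real) set" where
  "capacity_region N K S C A = closure {R. achievable N K S C A R}"

definition S6 :: "nat \<Rightarrow> nat set" where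
  "S6 k = (if k = 1 then {1,2,3} else if k = 2 then {2,3,4} else if k = 3 then {1,2}
           else if k = 4 then {2,4,5} else {})"

definition A6 :: "nat \<Rightarrow> nat set" where
  "A6 j = (if j = 1 then {4,5} else if j = 2 then {1,3,5} else if j = 3 then {1,2}
           else if j = 4 then {2,3,5} else if j = 5 then {3} else {})"

end

theory Submission
  imports Defs
begin

definition cnt :: "nat \<Rightarrow> nat \<Rightarrow> nat" where
"cnt t j = (if t = 0 then (if j=2 then 3 else if j=3 then 2 else if j=5 then 1 else 0)
  else if t = 1 then (if j=2 then 4 else if j=3 then 2 else 0)
  else if t = 2 then (if j=1 then 1 else if j=2 then 2 else if j=3 then 1 else if j=4 then 1 else if j=5 then 1 else 0)
  else if t = 3 then (if j=1 then 1 else if j=2 then 2 else if j=3 then 2 else if j=5 then 1 else 0)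
  else if t = 4 then (if j=1 then 1 else if j=2 then 3 else if j=3 then 2 else if j=4 then 1 else 0)
  else if t = 5 then (if j=1 then 2 else if j=2 then 1 else if j=3 then 1 else if j=4 then 1 else if j=5 then 1 else 0)
  else if t = 6 then (if j=1 then 2 else if j=2 then 2 else if j=3 then 1 else if j=4 then 2 else 0)
  else 0)"

definition enc :: "nat \<Rightarrow> nat \<Rightarrow> (nat \<Rightarrow> nat \<Rightarrow> bool) \<Rightarrow> bool" where
"enc t k x = (
 if t = 0 then (if k=1 then x 2 0 \<noteq> x 3 0 else if k=2 then x 2 1 \<noteq> x 3 1 else if k=3 then x 2 2 else x 5 0)
 else if t = 1 then (if k=1 then x 2 0 \<noteq> x 3 0 else if k=2 then x 2 1 \<noteq> x 3 1 else if k=3 then x 2 2 else x 2 3)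
 else if t = 2 then (if k=1 then x 2 1 \<noteq> x 3 0 else if k=2 then x 2 0 \<noteq> x 4 0 else if k=3 then x 1 0 \<noteq> x 2 0 else x 5 0)
 else if t = 3 then (if k=1 then x 2 0 \<noteq> x 3 0 else if k=2 then x 2 1 \<noteq> x 3 1 else if k=3 then x 1 0 else x 5 0)
 else if t = 4 then (if k=1 then x 2 1 \<noteq> x 3 0 else if k=2 then x 2 2 \<noteq> x 3 1 else if k=3 then x 1 0 \<noteq> x 2 0 else x 2 0 \<noteq> x 4 0)
 else if t = 5 then (if k=1 then x 1 1 \<noteq> (x 2 0 \<noteq> x 3 0) else if k=2 then x 2 0 \<noteq> (x 3 0 \<noteq> x 4 0) else if k=3 then x 1 0 else x 2 0 \<noteq> (x 4 0 \<noteq> x 5 0))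
 else (if k=1 then x 1 1 \<noteq> (x 2 1 \<noteq> x 3 0) else if k=2 then x 2 1 \<noteq> (x 3 0 \<noteq> x 4 1) else if k=3 then x 1 0 \<noteq> x 2 0 else x 2 0 \<noteq> x 4 0))"

definition dec :: "nat \<Rightarrow> nat \<Rightarrow> nat \<Rightarrow> (nat \<Rightarrow> bool) \<Rightarrow> (nat \<Rightarrow> nat \<Rightarrow> bool) \<Rightarrow> bool" where
"dec t j i s x = (
 if j = 1 then
   (if t = 2 then s 3 \<noteq> (s 2 \<noteq> x 4 0)
    else if t = 3 then s 3
    else if t = 4 then s 3 \<noteq> (s 4 \<noteq> x 4 0)
    else if t = 5 then (if i = 0 then s 3 else s 1 \<noteq> (s 2 \<noteq> x 4 0))
    else if t = 6 then (if i = 0 then s 3 \<noteq> (s 4 \<noteq> x 4 0) else s 1 \<noteq> (s 2 \<noteq> x 4 1))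
    else False)
 else if j = 2 then
   (if t = 0 \<or> t = 1 then (if i = 0 then s 1 \<noteq> x 3 0 else if i = 1 then s 2 \<noteq> x 3 1 else if i = 2 then s 3 else s 4)
    else if t = 2 then (if i = 0 then s 3 \<noteq> x 1 0 else s 1 \<noteq> x 3 0)
    else if t = 3 then (if i = 0 then s 1 \<noteq> x 3 0 else s 2 \<noteq> x 3 1)
    else if t = 4 then (if i = 0 then s 3 \<noteq> x 1 0 else if i = 1 then s 1 \<noteq> x 3 0 else s 2 \<noteq> x 3 1)
    else if t = 5 then s 1 \<noteq> (x 1 1 \<noteq> x 3 0)
    else (if i = 0 then s 3 \<noteq> x 1 0 else s 1 \<noteq> (x 1 1 \<noteq> x 3 0)))
 else if j = 3 then
   (if t = 0 \<or> t = 1 \<or> t = 3 then (if i = 0 then s 1 \<noteq> x 2 0 else s 2 \<noteq> x 2 1)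
    else if t = 2 then s 1 \<noteq> x 2 1
    else if t = 4 then (if i = 0 then s 1 \<noteq> x 2 1 else s 2 \<noteq> x 2 2)
    else if t = 5 then s 1 \<noteq> (x 1 1 \<noteq> x 2 0)
    else s 1 \<noteq> (x 1 1 \<noteq> x 2 1))
 else if j = 4 then
   (if t = 2 then s 2 \<noteq> x 2 0
    else if t = 4 then s 4 \<noteq> x 2 0
    else if t = 5 then s 4 \<noteq> (x 2 0 \<noteq> x 5 0)
    else (if i = 0 then s 4 \<noteq> x 2 0 else s 2 \<noteq> (x 2 1 \<noteq> x 3 0)))
 else (if t = 5 then s 2 \<noteq> (s 4 \<noteq> x 3 0) else s 4))"

lemma t7: "t < (7::nat) \<Longrightarrow> t = 0 \<or> t = 1 \<or> t = 2 \<or> t = 3 \<or> t = 4 \<or> t = 5 \<or> t = 6" by auto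
lemma j5: "j \<in> {1..5::nat} \<Longrightarrow> j = 1 \<or> j = 2 \<or> j = 3 \<or> j = 4 \<or> j = 5" by auto
lemma i4: "i < (4::nat) \<Longrightarrow> i = 0 \<or> i = 1 \<or> i = 2 \<or> i = 3" by auto

lemma cnt_le4: "cnt t j \<le> 4" unfolding cnt_def by auto

lemma dec_correct:
  assumes "t < 7" "j \<in> {1..5}" "i < cnt t j"
  shows "dec t j i (\<lambda>k. enc t k x) x = x j i"
proof -
  have "i < 4" using assms(3) cnt_le4[of t j] by linarith
  then show ?thesis using assms
    apply -
    apply (drule t7, drule j5, drule i4)
    apply (elim disjE)
    apply (simp_all add: dec_def enc_def cnt_def)
    apply auto
    done
qed

lemma enc_dep:
  assumes "k \<in> {1..4}" "\<forall>j\<in>S6 k. x j = x' j"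
  shows "enc t k x = enc t k x'"
  using assms unfolding S6_def enc_def by (auto)

lemma dec_dep:
  assumes "j \<in> {1..5}" "\<forall>k\<in>{1..4}. s k = s' k" "\<forall>i'\<in>A6 j. x i' = x' i'"
  shows "dec t j i s x = dec t j i s' x'"
proof -
  have s: "s (Suc 0) = s' (Suc 0)" "s 1 = s' 1" "s 2 = s' 2" "s 3 = s' 3" "s 4 = s' 4" using assms(2) by auto
  show ?thesis using assms(1) 
    apply -
    apply (drule j5)
    apply (elim disjE)
    using assms(3) by (simp_all add: A6_def dec_def s)
qed

definition off :: "nat list \<Rightarrow> nat \<Rightarrow> nat \<Rightarrow> nat" where
  "off ts j c = (\<Sum>c'<c. cnt (ts!c') j)"
definition Xb :: "nat list \<Rightarrow> (nat\<Rightarrow>nat) \<Rightarrow> nat \<Rightarrow> nat \<Rightarrow> nat \<Rightarrow> bool" where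
  "Xb ts m c = (\<lambda>j i. bit (m j) (off ts j c + i))"
definition Fc :: "nat list \<Rightarrow> nat \<Rightarrow> (nat \<Rightarrow> nat) \<Rightarrow> nat" where
  "Fc ts k m = horner_sum of_bool 2 (map (\<lambda>c. enc (ts!c) k (Xb ts m c)) [0..<length ts])"
definition Gc :: "nat list \<Rightarrow> nat \<Rightarrow> (nat \<Rightarrow> nat) \<Rightarrow> (nat \<Rightarrow> nat) \<Rightarrow> nat" where
  "Gc ts j l m = (\<Sum>c<length ts. \<Sum>i<cnt (ts!c) j.
      2^(off ts j c + i) * of_bool (dec (ts!c) j i (\<lambda>k. bit (l k) c) (Xb ts m c)))"

lemma bit_Fc: "c < length ts \<Longrightarrow> bit (Fc ts k m) c = enc (ts!c) k (Xb ts m c)"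
  unfolding Fc_def by (simp add: bit_horner_sum_bit_iff)

lemma Fc_less: "Fc ts k m < 2 ^ length ts"
proof -
  have "Fc ts k m < 2 ^ length (map (\<lambda>c. enc (ts!c) k (Xb ts m c)) [0..<length ts])"
    unfolding Fc_def by (rule horner_sum_of_bool_2_less)
  then show ?thesis by simp
qed

lemma sum_split_add: fixes a b :: nat and h :: "nat \<Rightarrow> 'a::comm_monoid_add"
  shows "(\<Sum>p<a+b. h p) = (\<Sum>p<a. h p) + (\<Sum>i<b. h (a+i))"
  by (induction b) (simp_all add: add.assoc)

lemma reindex: fixes K :: nat and w :: "nat \<Rightarrow> nat" and h :: "nat \<Rightarrow> 'a::comm_monoid_add"
  shows "(\<Sum>c<K. \<Sum>i<w c. h ((\<Sum>c'<c. w c') + i)) = (\<Sum>p<(\<Sum>c<K. w c). h p)"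
  by (induction K) (simp_all add: sum_split_add)

lemma sum_take_bit: "(\<Sum>p<T. 2^p * of_bool (bit (a::nat) p)) = take_bit T a"
proof -
  have "take_bit T a = horner_sum of_bool 2 (map (bit a) [0..<T])"
    by (simp add: horner_sum_bit_eq_take_bit)
  also have "\<dots> = (\<Sum>n=0..<T. of_bool (bit a n) * 2 ^ n)"
    by (simp add: horner_sum_eq_sum)
  finally show ?thesis by (simp add: atLeast0LessThan mult.commute)
qed

lemma Gc_correct:
  assumes ts: "\<forall>t\<in>set ts. t < 7" and j: "j \<in> {1..5}" and m: "m j < 2 ^ off ts j (length ts)"
  shows "Gc ts j (\<lambda>k. Fc ts k m) m = m j"
proof -
  have "Gc ts j (\<lambda>k. Fc ts k m) m =
     (\<Sum>c<length ts. \<Sum>i<cnt (ts!c) j. 2^(off ts j c + i) * of_bool (bit (m j) (off ts j c + i)))"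
    unfolding Gc_def
  proof (intro sum.cong refl)
    fix c i assume c: "c \<in> {..<length ts}" and i: "i \<in> {..<cnt (ts!c) j}"
    have t: "ts!c < 7" using ts c by auto
    have "(\<lambda>k. bit (Fc ts k m) c) = (\<lambda>k. enc (ts!c) k (Xb ts m c))" using c by (simp add: bit_Fc)
    then have "dec (ts!c) j i (\<lambda>k. bit (Fc ts k m) c) (Xb ts m c) = Xb ts m c j i"
      using dec_correct[OF t j] i by simp
    then show "2^(off ts j c + i) * of_bool (dec (ts!c) j i (\<lambda>k. bit (Fc ts k m) c) (Xb ts m c))
       = 2^(off ts j c + i) * of_bool (bit (m j) (off ts j c + i))" by (simp add: Xb_def)
  qed
  also have "\<dots> = (\<Sum>p<off ts j (length ts). 2^p * of_bool (bit (m j) p))"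
    unfolding off_def by (rule reindex)
  also have "\<dots> = take_bit (off ts j (length ts)) (m j)" by (rule sum_take_bit)
  also have "\<dots> = m j" using m by (simp add: take_bit_nat_eq_self_iff)
  finally show ?thesis .
qed

lemma Fc_dep:
  assumes "k \<in> {1..4}" "\<forall>i\<in>S6 k. m i = m' i"
  shows "Fc ts k m = Fc ts k m'"
proof -
  have "\<And>c. enc (ts!c) k (Xb ts m c) = enc (ts!c) k (Xb ts m' c)"
    by (rule enc_dep[OF assms(1)]) (use assms(2) in \<open>simp add: Xb_def\<close>)
  then show ?thesis unfolding Fc_def by simp
qed

lemma Gc_dep:
  assumes "j \<in> {1..5}" "\<forall>k\<in>{1..4}. l k = l' k" "\<forall>i\<in>A6 j. m i = m' i"
  shows "Gc ts j l m = Gc ts j l' m'"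
proof -
  have "\<And>c i. dec (ts!c) j i (\<lambda>k. bit (l k) c) (Xb ts m c) = dec (ts!c) j i (\<lambda>k. bit (l' k) c) (Xb ts m' c)"
    by (rule dec_dep[OF assms(1)]) (use assms(2,3) in \<open>simp_all add: Xb_def\<close>)
  then show ?thesis unfolding Gc_def by simp
qed

lemma off_full: "off ts j (length ts) = sum_list (map (\<lambda>t. cnt t j) ts)"
  unfolding off_def by (simp add: sum_list_sum_nth atLeast0LessThan)

definition tsf :: "nat \<Rightarrow> nat \<Rightarrow> nat \<Rightarrow> nat \<Rightarrow> nat \<Rightarrow> nat \<Rightarrow> nat \<Rightarrow> nat list" where
  "tsf k0 k1 k2 k3 k4 k5 k6 = replicate k0 0 @ replicate k1 1 @ replicate k2 2 @ replicate k3 3 @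
     replicate k4 4 @ replicate k5 5 @ replicate k6 6"

lemma tsf_set: "\<forall>t\<in>set (tsf k0 k1 k2 k3 k4 k5 k6). t < 7"
  unfolding tsf_def by auto

lemma tsf_len: "length (tsf k0 k1 k2 k3 k4 k5 k6) = k0 + k1 + k2 + k3 + k4 + k5 + k6"
  unfolding tsf_def by simp

lemma tsf_off: "off (tsf k0 k1 k2 k3 k4 k5 k6) j (length (tsf k0 k1 k2 k3 k4 k5 k6)) =
  k0 * cnt 0 j + k1 * cnt 1 j + k2 * cnt 2 j + k3 * cnt 3 j + k4 * cnt 4 j + k5 * cnt 5 j + k6 * cnt 6 j"
  unfolding off_full tsf_def by (simp add: sum_list_replicate)

lemma ceil_bound: "0 \<le> x \<Longrightarrow> x \<le> real (nat \<lceil>x\<rceil>) \<and> real (nat \<lceil>x\<rceil>) \<le> x + 1"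
  using real_nat_ceiling_ge[of x] of_int_ceiling_le_add_one[of x] by linarith

lemma ach:
  fixes R :: "nat \<Rightarrow> real" and mA mB mC mD mE mF mG :: real
  assumes R0: "\<forall>j. 0 \<le> R j" and Rsupp: "\<forall>j. j \<notin> {1..5} \<longrightarrow> R j = 0"
    and m0: "0 \<le> mA" "0 \<le> mB" "0 \<le> mC" "0 \<le> mD" "0 \<le> mE" "0 \<le> mF" "0 \<le> mG"
    and msum: "mA + mB + mC + mD + mE + mF + mG < 1"
    and r1: "R 1 \<le> mC + mD + mE + 2*mF + 2*mG"
    and r2: "R 2 \<le> 3*mA + 4*mB + 2*mC + 2*mD + 3*mE + mF + 2*mG"
    and r3: "R 3 \<le> 2*mA + 2*mB + mC + 2*mD + 2*mE + mF + mG"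
    and r4: "R 4 \<le> mC + mE + mF + 2*mG"
    and r5: "R 5 \<le> mA + mC + mD + mF"
  shows "achievable 5 4 S6 (\<lambda>k. 1) A6 R"
proof -
  define \<delta> where "\<delta> = 1 - (mA + mB + mC + mD + mE + mF + mG)"
  have \<delta>: "0 < \<delta>" using msum by (simp add: \<delta>_def)
  define N0 :: nat where "N0 = nat \<lceil>7 / \<delta>\<rceil>"
  have N0: "7 / \<delta> \<le> real N0" unfolding N0_def by (rule real_nat_ceiling_ge)
  define kk where "kk n x = nat \<lceil>real n * x\<rceil>" for n :: nat and x :: real
  have kk: "real n * x \<le> real (kk n x) \<and> real (kk n x) \<le> real n * x + 1" if "0 \<le> x" for n x
    unfolding kk_def using ceil_bound[of "real n * x"] that by simp
  define ts where "ts n = tsf (kk n mA) (kk n mB) (kk n mC) (kk n mD) (kk n mE) (kk n mF) (kk n mG)" for n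
  have len: "length (ts n) \<le> n" if "N0 \<le> n" for n
  proof -
    have "real (length (ts n)) = real (kk n mA) + real (kk n mB) + real (kk n mC) + real (kk n mD)
        + real (kk n mE) + real (kk n mF) + real (kk n mG)"
      unfolding ts_def tsf_len by simp
    also have "\<dots> \<le> real n * (mA + mB + mC + mD + mE + mF + mG) + 7"
      using kk[OF m0(1), of n] kk[OF m0(2), of n] kk[OF m0(3), of n] kk[OF m0(4), of n]
        kk[OF m0(5), of n] kk[OF m0(6), of n] kk[OF m0(7), of n] by (simp add: algebra_simps)
    also have "\<dots> = real n - real n * \<delta> + 7" by (simp add: \<delta>_def algebra_simps)
    also have "\<dots> \<le> real n"
    proof -
      have "7 \<le> real N0 * \<delta>" using N0 \<delta> by (simp add: field_simps)
      also have "\<dots> \<le> real n * \<delta>" using that \<delta> by (simp add: mult_right_mono)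
      finally show ?thesis by simp
    qed
    finally show ?thesis by simp
  qed
  have offge: "nat \<lfloor>real n * R j\<rfloor> \<le> off (ts n) j (length (ts n))" if j: "j \<in> {1..5}" for n j
  proof -
    have kA: "real n * mA \<le> real (kk n mA)" using kk[OF m0(1)] by blast
    have kB: "real n * mB \<le> real (kk n mB)" using kk[OF m0(2)] by blast
    have kC: "real n * mC \<le> real (kk n mC)" using kk[OF m0(3)] by blast
    have kD: "real n * mD \<le> real (kk n mD)" using kk[OF m0(4)] by blast
    have kE: "real n * mE \<le> real (kk n mE)" using kk[OF m0(5)] by blast
    have kF: "real n * mF \<le> real (kk n mF)" using kk[OF m0(6)] by blast
    have kG: "real n * mG \<le> real (kk n mG)" using kk[OF m0(7)] by blast
    have n0: "0 \<le> real n" by simp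
    have "real n * R j \<le> real (off (ts n) j (length (ts n)))"
      using j
      apply -
      apply (drule j5)
      apply (elim disjE)
      subgoal using mult_left_mono[OF r1 n0] kC kD kE kF kG by (simp add: ts_def tsf_off cnt_def algebra_simps)
      subgoal using mult_left_mono[OF r2 n0] kA kB kC kD kE kF kG by (simp add: ts_def tsf_off cnt_def algebra_simps)
      subgoal using mult_left_mono[OF r3 n0] kA kB kC kD kE kF kG by (simp add: ts_def tsf_off cnt_def algebra_simps)
      subgoal using mult_left_mono[OF r4 n0] kC kE kF kG by (simp add: ts_def tsf_off cnt_def algebra_simps)
      subgoal using mult_left_mono[OF r5 n0] kA kC kD kF by (simp add: ts_def tsf_off cnt_def algebra_simps)
      done
    then have "\<lfloor>real n * R j\<rfloor> \<le> int (off (ts n) j (length (ts n)))"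
      by (simp add: floor_le_iff)
    then show ?thesis by simp
  qed
  define f where "f n = (if N0 \<le> n then Fc (ts n) else (\<lambda>k m. 0))" for n
  define g where "g n = (if N0 \<le> n then Gc (ts n) else (\<lambda>j l m. 0))" for n
  have valid: "valid_code 5 4 S6 (\<lambda>k. 1) A6 n R (f n) (g n)" for n
  proof (cases "N0 \<le> n")
    case True
    show ?thesis unfolding valid_code_def f_def g_def using True
    proof (simp only: if_True, intro conjI ballI allI impI)
      fix k :: nat and m m' :: "nat \<Rightarrow> nat" assume "k \<in> {1..4}" "\<forall>i\<in>S6 k. m i = m' i"
      then show "Fc (ts n) k m = Fc (ts n) k m'" by (rule Fc_dep)
    next
      fix k :: nat and m :: "nat \<Rightarrow> nat" assume "k \<in> {1..4}" "m \<in> msg_set 5 n R"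
      have "Fc (ts n) k m < 2 ^ length (ts n)" by (rule Fc_less)
      also have "\<dots> \<le> 2 ^ n" using len[OF True] by (simp add: power_increasing)
      finally show "Fc (ts n) k m < 2 ^ nat \<lfloor>real n * 1\<rfloor>" by simp
    next
      fix j :: nat and l l' m m' :: "nat \<Rightarrow> nat" assume "j \<in> {1..5}" "(\<forall>k\<in>{1..4}. l k = l' k) \<and> (\<forall>i\<in>A6 j. m i = m' i)"
      then show "Gc (ts n) j l m = Gc (ts n) j l' m'" using Gc_dep by blast
    qed
  next
    case False
    then show ?thesis unfolding valid_code_def f_def g_def by simp
  qed
  have err0: "err_prob 5 n R (f n) (g n) = 0" if "N0 \<le> n" for n
  proof -
    have ok: "g n j (\<lambda>k. f n k m) m = m j" if m: "m \<in> msg_set 5 n R" and j: "j \<in> {1..5}" for m j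
    proof -
      have "m j < 2 ^ nat \<lfloor>real n * R j\<rfloor>" using m j unfolding msg_set_def by blast
      also have "\<dots> \<le> 2 ^ off (ts n) j (length (ts n))" using offge[OF j] by (simp add: power_increasing)
      finally have "Gc (ts n) j (\<lambda>k. Fc (ts n) k m) m = m j"
        using Gc_correct[OF _ j] ts_def tsf_set by auto
      then show ?thesis using \<open>N0 \<le> n\<close> unfolding f_def g_def by simp
    qed
    have E: "{m \<in> msg_set 5 n R. \<exists>j\<in>{1..5}. g n j (\<lambda>k. f n k m) m \<noteq> m j} = {}"
      using ok by auto
    show ?thesis unfolding err_prob_def E by simp
  qed
  have "(\<lambda>n. err_prob 5 n R (f n) (g n)) \<longlonglongrightarrow> 0"
    by (rule tendsto_eventually) (use err0 in \<open>auto simp: eventually_sequentially\<close>)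
  then show ?thesis unfolding achievable_def using R0 Rsupp valid by blast
qed

lemma msg_bij:
  "bij_betw (\<lambda>m. restrict m {1..5}) (msg_set 5 n R) (PiE {1..5} (\<lambda>j. {..<(2::nat) ^ nat \<lfloor>real n * R j\<rfloor>}))"
proof (rule bij_betw_imageI)
  show "inj_on (\<lambda>m. restrict m {1..5}) (msg_set 5 n R)"
  proof (rule inj_onI)
    fix m m' assume m: "m \<in> msg_set 5 n R" and m': "m' \<in> msg_set 5 n R"
      and e: "restrict m {1..5} = restrict m' {1..5}"
    show "m = m'"
    proof
      fix j show "m j = m' j"
      proof (cases "j \<in> {1..5}")
        case True then show ?thesis using fun_cong[OF e, of j] by simp
      next
        case False then show ?thesis using m m' unfolding msg_set_def by auto
      qed
    qed
  qed
  show "(\<lambda>m. restrict m {1..5}) ` msg_set 5 n R = PiE {1..5} (\<lambda>j. {..<(2::nat) ^ nat \<lfloor>real n * R j\<rfloor>})"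
  proof
    show "(\<lambda>m. restrict m {1..5}) ` msg_set 5 n R \<subseteq> PiE {1..5} (\<lambda>j. {..<(2::nat) ^ nat \<lfloor>real n * R j\<rfloor>})"
      unfolding msg_set_def by auto
  next
    show "PiE {1..5} (\<lambda>j. {..<(2::nat) ^ nat \<lfloor>real n * R j\<rfloor>}) \<subseteq> (\<lambda>m. restrict m {1..5}) ` msg_set 5 n R"
    proof
      fix p assume p: "p \<in> PiE {1..5} (\<lambda>j. {..<(2::nat) ^ nat \<lfloor>real n * R j\<rfloor>})"
      define m where "m j = (if j \<in> {1..5} then p j else 0)" for j
      have "m \<in> msg_set 5 n R" using p unfolding msg_set_def m_def by auto
      moreover have "restrict m {1..5} = p" using p unfolding m_def
        by (auto simp: restrict_def PiE_def extensional_def)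
      ultimately show "p \<in> (\<lambda>m. restrict m {1..5}) ` msg_set 5 n R" by force
    qed
  qed
qed

lemma card_msg: "card (msg_set 5 n R) = (\<Prod>j\<in>{1..5}. (2::nat) ^ nat \<lfloor>real n * R j\<rfloor>)"
  using bij_betw_same_card[OF msg_bij[of n R]] by (simp add: card_PiE)

lemma finite_msg: "finite (msg_set 5 n R)"
  using bij_betw_finite[OF msg_bij[of n R]] by (simp add: finite_PiE)

lemma count_bound:
  fixes f :: "nat \<Rightarrow> (nat \<Rightarrow> nat) \<Rightarrow> nat" and g :: "nat \<Rightarrow> (nat \<Rightarrow> nat) \<Rightarrow> (nat \<Rightarrow> nat) \<Rightarrow> nat"
  assumes valid: "valid_code 5 4 S6 (\<lambda>k. 1) A6 n R f g"
    and T: "T \<subseteq> {1..5}" and Q: "Q \<subseteq> {1..4}"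
    and inj: "\<And>m m'. m \<in> msg_set 5 n R \<Longrightarrow> m' \<in> msg_set 5 n R \<Longrightarrow>
      (\<forall>j\<in>{1..5}. g j (\<lambda>k. f k m) m = m j) \<Longrightarrow> (\<forall>j\<in>{1..5}. g j (\<lambda>k. f k m') m' = m' j) \<Longrightarrow>
      (\<forall>j\<in>{1..5}-T. m j = m' j) \<Longrightarrow> (\<forall>k\<in>Q. f k m = f k m') \<Longrightarrow> m = m'"
  defines "G \<equiv> {m \<in> msg_set 5 n R. \<forall>j\<in>{1..5}. g j (\<lambda>k. f k m) m = m j}"
  shows "card G * (\<Prod>j\<in>T. (2::nat) ^ nat \<lfloor>real n * R j\<rfloor>) \<le> card (msg_set 5 n R) * (2 ^ n) ^ card Q"
proof -
  define B where "B j = {..<(2::nat) ^ nat \<lfloor>real n * R j\<rfloor>}" for j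
  define Fx where "Fx = {1..5::nat} - T"
  define \<Phi> where "\<Phi> m = (restrict m Fx, restrict (\<lambda>k. f k m) Q)" for m
  have fQ: "finite Q" using Q finite_subset by blast
  have "inj_on \<Phi> G"
  proof (rule inj_onI)
    fix m m' assume "m \<in> G" "m' \<in> G" "\<Phi> m = \<Phi> m'"
    then have e1: "restrict m Fx = restrict m' Fx" and e2: "restrict (\<lambda>k. f k m) Q = restrict (\<lambda>k. f k m') Q"
      and mG: "m \<in> msg_set 5 n R" "\<forall>j\<in>{1..5}. g j (\<lambda>k. f k m) m = m j"
      and mG': "m' \<in> msg_set 5 n R" "\<forall>j\<in>{1..5}. g j (\<lambda>k. f k m') m' = m' j"
      unfolding \<Phi>_def G_def by auto
    have a: "\<forall>j\<in>{1..5}-T. m j = m' j" using e1 unfolding Fx_def by (metis restrict_apply')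
    have b: "\<forall>k\<in>Q. f k m = f k m'" using e2 by (metis restrict_apply')
    show "m = m'" by (rule inj[OF mG(1) mG'(1) mG(2) mG'(2) a b])
  qed
  moreover have "\<Phi> ` G \<subseteq> PiE Fx B \<times> PiE Q (\<lambda>_. {..<(2::nat)^n})"
  proof
    fix y assume "y \<in> \<Phi> ` G"
    then obtain m where m: "m \<in> msg_set 5 n R" and y: "y = \<Phi> m" unfolding G_def by auto
    have "restrict m Fx \<in> PiE Fx B" using m unfolding msg_set_def B_def Fx_def by auto
    moreover have "f k m < 2 ^ n" if "k \<in> Q" for k
      using valid m Q that unfolding valid_code_def by auto
    then have "restrict (\<lambda>k. f k m) Q \<in> PiE Q (\<lambda>_. {..<(2::nat)^n})" by auto
    ultimately show "y \<in> PiE Fx B \<times> PiE Q (\<lambda>_. {..<(2::nat)^n})" unfolding y \<Phi>_def by auto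
  qed
  ultimately have "card G \<le> card (PiE Fx B \<times> PiE Q (\<lambda>_. {..<(2::nat)^n}))"
    by (intro card_inj_on_le[where f=\<Phi>]) (auto simp: Fx_def B_def fQ finite_PiE)
  also have "\<dots> = (\<Prod>j\<in>Fx. 2 ^ nat \<lfloor>real n * R j\<rfloor>) * (2^n) ^ card Q"
    unfolding card_cartesian_product by (simp add: card_PiE Fx_def B_def fQ)
  finally have "card G * (\<Prod>j\<in>T. (2::nat) ^ nat \<lfloor>real n * R j\<rfloor>) \<le>
      (\<Prod>j\<in>Fx. 2 ^ nat \<lfloor>real n * R j\<rfloor>) * (\<Prod>j\<in>T. (2::nat) ^ nat \<lfloor>real n * R j\<rfloor>) * (2^n) ^ card Q"
    by (simp add: algebra_simps)
  also have "(\<Prod>j\<in>Fx. 2 ^ nat \<lfloor>real n * R j\<rfloor>) * (\<Prod>j\<in>T. (2::nat) ^ nat \<lfloor>real n * R j\<rfloor>) = card (msg_set 5 n R)"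
    unfolding card_msg Fx_def using prod.subset_diff[OF T, of "\<lambda>j. (2::nat) ^ nat \<lfloor>real n * R j\<rfloor>"] by simp
  finally show ?thesis .
qed

lemma conv_generic:
  assumes ach: "achievable 5 4 S6 (\<lambda>k. 1) A6 R"
    and T: "T \<subseteq> {1..5}" and Q: "Q \<subseteq> {1..4}"
    and inj: "\<And>n (f :: nat \<Rightarrow> (nat \<Rightarrow> nat) \<Rightarrow> nat) (g :: nat \<Rightarrow> (nat \<Rightarrow> nat) \<Rightarrow> (nat \<Rightarrow> nat) \<Rightarrow> nat) m m'.
      valid_code 5 4 S6 (\<lambda>k. 1) A6 n R f g \<Longrightarrow>
      m \<in> msg_set 5 n R \<Longrightarrow> m' \<in> msg_set 5 n R \<Longrightarrow>
      (\<forall>j\<in>{1..5}. g j (\<lambda>k. f k m) m = m j) \<Longrightarrow> (\<forall>j\<in>{1..5}. g j (\<lambda>k. f k m') m' = m' j) \<Longrightarrow>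
      (\<forall>j\<in>{1..5}-T. m j = m' j) \<Longrightarrow> (\<forall>k\<in>Q. f k m = f k m') \<Longrightarrow> m = m'"
  shows "(\<Sum>j\<in>T. R j) \<le> real (card Q)"
proof (rule ccontr)
  assume "\<not> ?thesis"
  then have gt: "real (card Q) < (\<Sum>j\<in>T. R j)" by simp
  define S where "S = (\<Sum>j\<in>T. R j)"
  define c where "c = real (card Q)"
  from ach obtain f g where R0: "\<forall>j. 0 \<le> R j" and valid: "\<forall>n. valid_code 5 4 S6 (\<lambda>k. 1) A6 n R (f n) (g n)"
    and lim: "(\<lambda>n. err_prob 5 n R (f n) (g n)) \<longlonglongrightarrow> 0"
    unfolding achievable_def by blast
  have fT: "finite T" using T finite_subset by blast
  define q where "q = 2 powr (c - S)"
  have q0: "0 < q" unfolding q_def by simp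
  have "2 powr (c - S) < 2 powr (0::real)" by (rule powr_less_mono) (use gt in \<open>simp_all add: c_def S_def\<close>)
  then have q1: "q < 1" unfolding q_def by simp
  have bound: "1 - err_prob 5 n R (f n) (g n) \<le> 2 powr real (card T) * q ^ n" for n
  proof -
    define M where "M = msg_set 5 n R"
    define G where "G = {m \<in> msg_set 5 n R. \<forall>j\<in>{1..5}. g n j (\<lambda>k. f n k m) m = m j}"
    define P where "P = (\<Prod>j\<in>T. (2::nat) ^ nat \<lfloor>real n * R j\<rfloor>)"
    have key: "card G * P \<le> card M * (2 ^ n) ^ card Q"
      unfolding G_def P_def M_def
      by (rule count_bound[OF spec[OF valid, of n] T Q]) (rule inj[OF spec[OF valid, of n]], assumption+)
    have fM: "finite M" unfolding M_def by (rule finite_msg)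
    have GM: "G \<subseteq> M" unfolding G_def M_def by auto
    have Mpos: "0 < card M" unfolding M_def card_msg by simp
    have Ppos: "0 < P" unfolding P_def by (rule prod_pos) simp
    have bad: "{m \<in> msg_set 5 n R. \<exists>j\<in>{1..5}. g n j (\<lambda>k. f n k m) m \<noteq> m j} = M - G"
      unfolding M_def G_def by auto
    have cG: "card G \<le> card M" using card_mono[OF fM GM] .
    have err: "err_prob 5 n R (f n) (g n) = 1 - real (card G) / real (card M)"
      unfolding err_prob_def bad card_Diff_subset[OF finite_subset[OF GM fM] GM]
      using Mpos cG by (simp add: of_nat_diff field_simps M_def)
    have Preal: "2 powr (real n * S - real (card T)) \<le> real P"
    proof -
      have "2 powr (real n * S - real (card T)) = 2 powr (\<Sum>j\<in>T. real n * R j - 1)"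
        unfolding S_def by (simp add: sum_subtractf sum_distrib_left)
      also have "\<dots> = (\<Prod>j\<in>T. 2 powr (real n * R j - 1))" by (rule powr_sum) simp
      also have "\<dots> \<le> (\<Prod>j\<in>T. real ((2::nat) ^ nat \<lfloor>real n * R j\<rfloor>))"
      proof (rule prod_mono, safe)
        fix j assume "j \<in> T"
        have nn: "0 \<le> real n * R j" using R0 by simp
        have "real n * R j - 1 \<le> real (nat \<lfloor>real n * R j\<rfloor>)"
          using nn by linarith
        then have "2 powr (real n * R j - 1) \<le> 2 powr real (nat \<lfloor>real n * R j\<rfloor>)" by simp
        also have "\<dots> = real ((2::nat) ^ nat \<lfloor>real n * R j\<rfloor>)" by (simp add: powr_realpow)
        finally show "2 powr (real n * R j - 1) \<le> real ((2::nat) ^ nat \<lfloor>real n * R j\<rfloor>)" .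
      qed simp
      also have "\<dots> = real P" unfolding P_def by simp
      finally show ?thesis .
    qed
    have "real (card G) * real P \<le> real (card M) * 2 powr (real n * c)"
    proof -
      have k1: "real (card G) * real P \<le> real (card M) * real (((2::nat) ^ n) ^ card Q)"
        using key by (metis of_nat_le_iff of_nat_mult)
      have e: "real (((2::nat) ^ n) ^ card Q) = 2 powr (real n * c)"
        unfolding c_def by (simp add: powr_realpow[symmetric] powr_powr)
      from k1 show ?thesis unfolding e .
    qed
    then have "real (card G) / real (card M) \<le> 2 powr (real n * c) / real P"
      using Mpos Ppos by (simp add: field_simps)
    also have "\<dots> \<le> 2 powr (real n * c) / 2 powr (real n * S - real (card T))"
      by (rule divide_left_mono[OF Preal]) (use Ppos in auto)
    also have "\<dots> = 2 powr real (card T) * q ^ n"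
    proof -
      have "2 powr (real n * c) / 2 powr (real n * S - real (card T)) = 2 powr (real (card T) + real n * (c - S))"
        by (simp add: powr_diff[symmetric] algebra_simps)
      also have "\<dots> = 2 powr real (card T) * (2 powr (c - S)) powr real n"
        by (simp add: powr_add[symmetric] powr_powr algebra_simps)
      also have "\<dots> = 2 powr real (card T) * q ^ n" unfolding q_def by (simp add: powr_realpow)
      finally show ?thesis .
    qed
    finally show ?thesis using err by simp
  qed
  have l1: "(\<lambda>n. 1 - err_prob 5 n R (f n) (g n)) \<longlonglongrightarrow> 1"
    using tendsto_diff[OF tendsto_const lim] by simp
  have l2: "(\<lambda>n. 2 powr real (card T) * q ^ n) \<longlonglongrightarrow> 0"
    using tendsto_mult_right_zero[OF LIMSEQ_power_zero[of q]] q0 q1 by simp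
  have "(1::real) \<le> 0" by (rule LIMSEQ_le[OF l1 l2]) (use bound in blast)
  then show False by simp
qed

lemma step6:
  fixes R1 R2 R3 R4 R5  :: real
  assumes h0: "0 \<le> R1"
    and h1: "0 \<le> R2"
    and h2: "0 \<le> R3"
    and h3: "0 \<le> R4"
    and h4: "0 \<le> R5"
    and h5: "R1 + R2 + R5 \<le> 4"
    and h6: "R3 + R4 + R5 \<le> 3"
    and h7: "R1 + R3 \<le> 3"
    and h8: "R2 + R4 + R5 \<le> 4"
    and h9: "R1 \<le> 2"
    and h10: "R5 \<le> 1"
    and h11: "R4 + R5 \<le> 2"
    and h12: "R3 \<le> 2"
  shows "\<exists>mG. 0 \<le> mG \<and> 0 \<le> R1 \<and> 0 \<le> R2 \<and> 0 \<le> R3 \<and> 0 \<le> R4 \<and> 0 \<le> R5 \<and> R1 + R2 + R5 \<le> 4 \<and> R4 \<le> mG + 1 \<and> R5 + mG \<le> 1 \<and> R3 + R4 + R5 \<le> 3 \<and> R3 + mG \<le> 2 \<and> R1 + R3 \<le> 3 \<and> R2 + R4 + R5 \<le> 4 \<and> R1 \<le> 2 \<and> 2*R1 + R2 \<le> mG + 5 \<and> R2 + R5 + 2*mG \<le> 4"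
proof -
  define mG where "mG = max ((1)*R4 + (-1)) (max ((2)*R1 + (1)*R2 + (-5)) (0))"
  have u0_0: "((1)*R4 + (-1)) \<le> ((-1)*R5 + (1))" using h11 by linarith
  have u0_1: "((2)*R1 + (1)*R2 + (-5)) \<le> ((-1)*R5 + (1))" using h5 h9 by linarith
  have u0_2: "((0)) \<le> ((-1)*R5 + (1))" using h10 by linarith
  have ub0: "mG \<le> ((-1)*R5 + (1))" unfolding mG_def by (rule max.boundedI[OF u0_0 max.boundedI[OF u0_1 u0_2]])
  have u1_0: "((1)*R4 + (-1)) \<le> ((-1)*R3 + (2))" using h4 h6 by linarith
  have u1_1: "((2)*R1 + (1)*R2 + (-5)) \<le> ((-1)*R3 + (2))" using h4 h5 h7 by linarith
  have u1_2: "((0)) \<le> ((-1)*R3 + (2))" using h12 by linarith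
  have ub1: "mG \<le> ((-1)*R3 + (2))" unfolding mG_def by (rule max.boundedI[OF u1_0 max.boundedI[OF u1_1 u1_2]])
  have u2_0: "((1)*R4 + (-1)) \<le> ((-1/2)*R2 + (-1/2)*R5 + (2))" using h4 h8 h11 by linarith
  have u2_1: "((2)*R1 + (1)*R2 + (-5)) \<le> ((-1/2)*R2 + (-1/2)*R5 + (2))" using h4 h5 h9 by linarith
  have u2_2: "((0)) \<le> ((-1/2)*R2 + (-1/2)*R5 + (2))" using h0 h5 by linarith
  have ub2: "mG \<le> ((-1/2)*R2 + (-1/2)*R5 + (2))" unfolding mG_def by (rule max.boundedI[OF u2_0 max.boundedI[OF u2_1 u2_2]])
  have lb0: "((1)*R4 + (-1)) \<le> mG" unfolding mG_def by (simp only: max.cobounded1 max.coboundedI2)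
  have lb1: "((2)*R1 + (1)*R2 + (-5)) \<le> mG" unfolding mG_def by (simp only: max.cobounded1 max.coboundedI2)
  have lbz: "0 \<le> mG" unfolding mG_def by (simp only: max.cobounded1 max.coboundedI2 order.refl)
  show ?thesis
    apply (rule exI[of _ mG])
    apply (intro conjI)
    subgoal using lbz by linarith
    subgoal using h0 by linarith
    subgoal using h1 by linarith
    subgoal using h2 by linarith
    subgoal using h3 by linarith
    subgoal using h4 by linarith
    subgoal using h5 by linarith
    subgoal using lb0 by linarith
    subgoal using ub0 by linarith
    subgoal using h6 by linarith
    subgoal using ub1 by linarith
    subgoal using h7 by linarith
    subgoal using h8 by linarith
    subgoal using h9 by linarith
    subgoal using lb1 by linarith
    subgoal using ub2 by linarith
    done
qed

lemma step5:
  fixes R1 R2 R3 R4 R5 mG :: real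
  assumes h0: "0 \<le> mG"
    and h1: "0 \<le> R1"
    and h2: "0 \<le> R2"
    and h3: "0 \<le> R3"
    and h4: "0 \<le> R4"
    and h5: "0 \<le> R5"
    and h6: "R1 + R2 + R5 \<le> 4"
    and h7: "R4 \<le> mG + 1"
    and h8: "R5 + mG \<le> 1"
    and h9: "R3 + R4 + R5 \<le> 3"
    and h10: "R3 + mG \<le> 2"
    and h11: "R1 + R3 \<le> 3"
    and h12: "R2 + R4 + R5 \<le> 4"
    and h13: "R1 \<le> 2"
    and h14: "2*R1 + R2 \<le> mG + 5"
    and h15: "R2 + R5 + 2*mG \<le> 4"
  shows "\<exists>mF. 0 \<le> mF \<and> 0 \<le> mG \<and> 0 \<le> R1 \<and> 0 \<le> R2 \<and> 0 \<le> R3 \<and> 0 \<le> R4 \<and> 0 \<le> R5 \<and> R3 + mF + mG \<le> 2 \<and> R1 \<le> mF + mG + 1 \<and> R1 + R2 + R5 \<le> 4 \<and> R4 \<le> mG + 1 \<and> R2 + R4 + R5 + mF \<le> 4 \<and> R5 + mG \<le> 1 \<and> R3 + R4 + R5 \<le> 3 \<and> mF + mG \<le> 1 \<and> R2 + 3*mF + 2*mG \<le> 4 \<and> R1 + R2 + mF \<le> 4 \<and> R2 + R4 + 2*mF \<le> 4 \<and> R2 + R5 + 2*mF + 2*mG \<le> 4"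
proof -
  define mF where "mF = max ((1)*R1 + (-1)*mG + (-1)) (0)"
  have u0_0: "((1)*R1 + (-1)*mG + (-1)) \<le> ((-1)*R3 + (-1)*mG + (2))" using h11 by linarith
  have u0_1: "((0)) \<le> ((-1)*R3 + (-1)*mG + (2))" using h10 by linarith
  have ub0: "mF \<le> ((-1)*R3 + (-1)*mG + (2))" unfolding mF_def by (rule max.boundedI[OF u0_0 u0_1])
  have u1_0: "((1)*R1 + (-1)*mG + (-1)) \<le> ((-1)*R2 + (-1)*R4 + (-1)*R5 + (4))" using h6 h7 by linarith
  have u1_1: "((0)) \<le> ((-1)*R2 + (-1)*R4 + (-1)*R5 + (4))" using h12 by linarith
  have ub1: "mF \<le> ((-1)*R2 + (-1)*R4 + (-1)*R5 + (4))" unfolding mF_def by (rule max.boundedI[OF u1_0 u1_1])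
  have u2_0: "((1)*R1 + (-1)*mG + (-1)) \<le> ((-1)*mG + (1))" using h13 by linarith
  have u2_1: "((0)) \<le> ((-1)*mG + (1))" using h5 h8 by linarith
  have ub2: "mF \<le> ((-1)*mG + (1))" unfolding mF_def by (rule max.boundedI[OF u2_0 u2_1])
  have u3_0: "((1)*R1 + (-1)*mG + (-1)) \<le> ((-1/3)*R2 + (-2/3)*mG + (4/3))" using h13 h14 by linarith
  have u3_1: "((0)) \<le> ((-1/3)*R2 + (-2/3)*mG + (4/3))" using h5 h15 by linarith
  have ub3: "mF \<le> ((-1/3)*R2 + (-2/3)*mG + (4/3))" unfolding mF_def by (rule max.boundedI[OF u3_0 u3_1])
  have u4_0: "((1)*R1 + (-1)*mG + (-1)) \<le> ((-1)*R1 + (-1)*R2 + (4))" using h14 by linarith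
  have u4_1: "((0)) \<le> ((-1)*R1 + (-1)*R2 + (4))" using h5 h6 by linarith
  have ub4: "mF \<le> ((-1)*R1 + (-1)*R2 + (4))" unfolding mF_def by (rule max.boundedI[OF u4_0 u4_1])
  have u5_0: "((1)*R1 + (-1)*mG + (-1)) \<le> ((-1/2)*R2 + (-1/2)*R4 + (2))" using h7 h14 by linarith
  have u5_1: "((0)) \<le> ((-1/2)*R2 + (-1/2)*R4 + (2))" using h5 h12 by linarith
  have ub5: "mF \<le> ((-1/2)*R2 + (-1/2)*R4 + (2))" unfolding mF_def by (rule max.boundedI[OF u5_0 u5_1])
  have u6_0: "((1)*R1 + (-1)*mG + (-1)) \<le> ((-1/2)*R2 + (-1/2)*R5 + (-1)*mG + (2))" using h6 h13 by linarith
  have u6_1: "((0)) \<le> ((-1/2)*R2 + (-1/2)*R5 + (-1)*mG + (2))" using h15 by linarith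
  have ub6: "mF \<le> ((-1/2)*R2 + (-1/2)*R5 + (-1)*mG + (2))" unfolding mF_def by (rule max.boundedI[OF u6_0 u6_1])
  have lb0: "((1)*R1 + (-1)*mG + (-1)) \<le> mF" unfolding mF_def by (simp only: max.cobounded1 max.coboundedI2)
  have lbz: "0 \<le> mF" unfolding mF_def by (simp only: max.cobounded1 max.coboundedI2 order.refl)
  show ?thesis
    apply (rule exI[of _ mF])
    apply (intro conjI)
    subgoal using lbz by linarith
    subgoal using h0 by linarith
    subgoal using h1 by linarith
    subgoal using h2 by linarith
    subgoal using h3 by linarith
    subgoal using h4 by linarith
    subgoal using h5 by linarith
    subgoal using ub0 by linarith
    subgoal using lb0 by linarith
    subgoal using h6 by linarith
    subgoal using h7 by linarith
    subgoal using ub1 by linarith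
    subgoal using h8 by linarith
    subgoal using h9 by linarith
    subgoal using ub2 by linarith
    subgoal using ub3 by linarith
    subgoal using ub4 by linarith
    subgoal using ub5 by linarith
    subgoal using ub6 by linarith
    done
qed

lemma step4:
  fixes R1 R2 R3 R4 R5 mF mG :: real
  assumes h0: "0 \<le> mF"
    and h1: "0 \<le> mG"
    and h2: "0 \<le> R1"
    and h3: "0 \<le> R2"
    and h4: "0 \<le> R3"
    and h5: "0 \<le> R4"
    and h6: "0 \<le> R5"
    and h7: "R3 + mF + mG \<le> 2"
    and h8: "R1 \<le> mF + mG + 1"
    and h9: "R1 + R2 + R5 \<le> 4"
    and h10: "R4 \<le> mG + 1"
    and h11: "R2 + R4 + R5 + mF \<le> 4"
    and h12: "R5 + mG \<le> 1"
    and h13: "R3 + R4 + R5 \<le> 3"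
    and h14: "mF + mG \<le> 1"
    and h15: "R2 + 3*mF + 2*mG \<le> 4"
    and h16: "R1 + R2 + mF \<le> 4"
    and h17: "R2 + R4 + 2*mF \<le> 4"
    and h18: "R2 + R5 + 2*mF + 2*mG \<le> 4"
  shows "\<exists>mE. 0 \<le> mE \<and> 0 \<le> mF \<and> 0 \<le> mG \<and> 0 \<le> R1 \<and> 0 \<le> R2 \<and> 0 \<le> R3 \<and> 0 \<le> R4 \<and> 0 \<le> R5 \<and> R5 + mE + mG \<le> 1 \<and> R3 + mF + mG \<le> 2 \<and> R3 + R4 \<le> mE + mG + 2 \<and> R1 \<le> mF + mG + 1 \<and> 2*R1 + R2 \<le> mE + mF + 2*mG + 4 \<and> R1 + R2 + R5 \<le> 4 \<and> mE + mF + mG \<le> 1 \<and> R4 \<le> mG + 1 \<and> R2 + mE + 3*mF + 2*mG \<le> 4 \<and> R2 + 2*R4 + mF \<le> mE + 2*mG + 4 \<and> R2 + R5 + mE + 2*mF + 2*mG \<le> 4 \<and> R2 + R4 + R5 + mF \<le> 4"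
proof -
  define mE where "mE = max ((1)*R3 + (1)*R4 + (-1)*mG + (-2)) (max ((2)*R1 + (1)*R2 + (-1)*mF + (-2)*mG + (-4)) (max ((1)*R2 + (2)*R4 + (1)*mF + (-2)*mG + (-4)) (0)))"
  have u0_0: "((1)*R3 + (1)*R4 + (-1)*mG + (-2)) \<le> ((-1)*R5 + (-1)*mG + (1))" using h13 by linarith
  have u0_1: "((2)*R1 + (1)*R2 + (-1)*mF + (-2)*mG + (-4)) \<le> ((-1)*R5 + (-1)*mG + (1))" using h8 h9 by linarith
  have u0_2: "((1)*R2 + (2)*R4 + (1)*mF + (-2)*mG + (-4)) \<le> ((-1)*R5 + (-1)*mG + (1))" using h10 h11 by linarith
  have u0_3: "((0)) \<le> ((-1)*R5 + (-1)*mG + (1))" using h12 by linarith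
  have ub0: "mE \<le> ((-1)*R5 + (-1)*mG + (1))" unfolding mE_def by (rule max.boundedI[OF u0_0 max.boundedI[OF u0_1 max.boundedI[OF u0_2 u0_3]]])
  have u1_0: "((1)*R3 + (1)*R4 + (-1)*mG + (-2)) \<le> ((-1)*mF + (-1)*mG + (1))" using h7 h10 by linarith
  have u1_1: "((2)*R1 + (1)*R2 + (-1)*mF + (-2)*mG + (-4)) \<le> ((-1)*mF + (-1)*mG + (1))" using h8 h16 by linarith
  have u1_2: "((1)*R2 + (2)*R4 + (1)*mF + (-2)*mG + (-4)) \<le> ((-1)*mF + (-1)*mG + (1))" using h10 h17 by linarith
  have u1_3: "((0)) \<le> ((-1)*mF + (-1)*mG + (1))" using h14 by linarith
  have ub1: "mE \<le> ((-1)*mF + (-1)*mG + (1))" unfolding mE_def by (rule max.boundedI[OF u1_0 max.boundedI[OF u1_1 max.boundedI[OF u1_2 u1_3]]])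
  have u2_0: "((1)*R3 + (1)*R4 + (-1)*mG + (-2)) \<le> ((-1)*R2 + (-3)*mF + (-2)*mG + (4))" using h7 h17 by linarith
  have u2_1: "((2)*R1 + (1)*R2 + (-1)*mF + (-2)*mG + (-4)) \<le> ((-1)*R2 + (-3)*mF + (-2)*mG + (4))" using h16 by linarith
  have u2_2: "((1)*R2 + (2)*R4 + (1)*mF + (-2)*mG + (-4)) \<le> ((-1)*R2 + (-3)*mF + (-2)*mG + (4))" using h17 by linarith
  have u2_3: "((0)) \<le> ((-1)*R2 + (-3)*mF + (-2)*mG + (4))" using h15 by linarith
  have ub2: "mE \<le> ((-1)*R2 + (-3)*mF + (-2)*mG + (4))" unfolding mE_def by (rule max.boundedI[OF u2_0 max.boundedI[OF u2_1 max.boundedI[OF u2_2 u2_3]]])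
  have u3_0: "((1)*R3 + (1)*R4 + (-1)*mG + (-2)) \<le> ((-1)*R2 + (-1)*R5 + (-2)*mF + (-2)*mG + (4))" using h7 h11 by linarith
  have u3_1: "((2)*R1 + (1)*R2 + (-1)*mF + (-2)*mG + (-4)) \<le> ((-1)*R2 + (-1)*R5 + (-2)*mF + (-2)*mG + (4))" using h9 h16 by linarith
  have u3_2: "((1)*R2 + (2)*R4 + (1)*mF + (-2)*mG + (-4)) \<le> ((-1)*R2 + (-1)*R5 + (-2)*mF + (-2)*mG + (4))" using h11 h17 by linarith
  have u3_3: "((0)) \<le> ((-1)*R2 + (-1)*R5 + (-2)*mF + (-2)*mG + (4))" using h18 by linarith
  have ub3: "mE \<le> ((-1)*R2 + (-1)*R5 + (-2)*mF + (-2)*mG + (4))" unfolding mE_def by (rule max.boundedI[OF u3_0 max.boundedI[OF u3_1 max.boundedI[OF u3_2 u3_3]]])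
  have lb0: "((1)*R3 + (1)*R4 + (-1)*mG + (-2)) \<le> mE" unfolding mE_def by (simp only: max.cobounded1 max.coboundedI2)
  have lb1: "((2)*R1 + (1)*R2 + (-1)*mF + (-2)*mG + (-4)) \<le> mE" unfolding mE_def by (simp only: max.cobounded1 max.coboundedI2)
  have lb2: "((1)*R2 + (2)*R4 + (1)*mF + (-2)*mG + (-4)) \<le> mE" unfolding mE_def by (simp only: max.cobounded1 max.coboundedI2)
  have lbz: "0 \<le> mE" unfolding mE_def by (simp only: max.cobounded1 max.coboundedI2 order.refl)
  show ?thesis
    apply (rule exI[of _ mE])
    apply (intro conjI)
    subgoal using lbz by linarith
    subgoal using h0 by linarith
    subgoal using h1 by linarith
    subgoal using h2 by linarith
    subgoal using h3 by linarith
    subgoal using h4 by linarith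
    subgoal using h5 by linarith
    subgoal using h6 by linarith
    subgoal using ub0 by linarith
    subgoal using h7 by linarith
    subgoal using lb0 by linarith
    subgoal using h8 by linarith
    subgoal using lb1 by linarith
    subgoal using h9 by linarith
    subgoal using ub1 by linarith
    subgoal using h10 by linarith
    subgoal using ub2 by linarith
    subgoal using lb2 by linarith
    subgoal using ub3 by linarith
    subgoal using h11 by linarith
    done
qed

lemma step3:
  fixes R1 R2 R3 R4 R5 mE mF mG :: real
  assumes h0: "0 \<le> mE"
    and h1: "0 \<le> mF"
    and h2: "0 \<le> mG"
    and h3: "0 \<le> R1"
    and h4: "0 \<le> R2"
    and h5: "0 \<le> R3"
    and h6: "0 \<le> R4"
    and h7: "0 \<le> R5"
    and h8: "R5 + mE + mG \<le> 1"
    and h9: "R3 + mF + mG \<le> 2"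
    and h10: "R3 + R4 \<le> mE + mG + 2"
    and h11: "R1 \<le> mF + mG + 1"
    and h12: "2*R1 + R2 \<le> mE + mF + 2*mG + 4"
    and h13: "R1 + R2 + R5 \<le> 4"
    and h14: "mE + mF + mG \<le> 1"
    and h15: "R4 \<le> mG + 1"
    and h16: "R2 + mE + 3*mF + 2*mG \<le> 4"
    and h17: "R2 + 2*R4 + mF \<le> mE + 2*mG + 4"
    and h18: "R2 + R5 + mE + 2*mF + 2*mG \<le> 4"
    and h19: "R2 + R4 + R5 + mF \<le> 4"
  shows "\<exists>mD. 0 \<le> mD \<and> 0 \<le> mE \<and> 0 \<le> mF \<and> 0 \<le> mG \<and> 0 \<le> R1 \<and> 0 \<le> R2 \<and> 0 \<le> R3 \<and> 0 \<le> R4 \<and> 0 \<le> R5 \<and> R5 + mE + mG \<le> 1 \<and> R3 + mF + mG \<le> 2 \<and> R1 + R3 \<le> mD + mE + mF + mG + 2 \<and> R3 + R4 \<le> mE + mG + 2 \<and> mD + mE + mF + mG \<le> 1 \<and> R1 \<le> mF + mG + 1 \<and> R4 + mD \<le> mG + 1 \<and> R2 + 2*mD + mE + 3*mF + 2*mG \<le> 4 \<and> 2*R1 + R2 \<le> mE + mF + 2*mG + 4 \<and> R2 + 2*R4 + 2*mD + mF \<le> mE + 2*mG + 4 \<and> R2 + R5 + mD + mE + 2*mF + 2*mG \<le> 4 \<and> R1 + R2 + R5 \<le> 4 \<and> R2 + R4 + R5 + mD + mF \<le> 4"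
proof -
  define mD where "mD = max ((1)*R1 + (1)*R3 + (-1)*mE + (-1)*mF + (-1)*mG + (-2)) (0)"
  have u0_0: "((1)*R1 + (1)*R3 + (-1)*mE + (-1)*mF + (-1)*mG + (-2)) \<le> ((-1)*mE + (-1)*mF + (-1)*mG + (1))" using h9 h11 by linarith
  have u0_1: "((0)) \<le> ((-1)*mE + (-1)*mF + (-1)*mG + (1))" using h14 by linarith
  have ub0: "mD \<le> ((-1)*mE + (-1)*mF + (-1)*mG + (1))" unfolding mD_def by (rule max.boundedI[OF u0_0 u0_1])
  have u1_0: "((1)*R1 + (1)*R3 + (-1)*mE + (-1)*mF + (-1)*mG + (-2)) \<le> ((-1)*R4 + (1)*mG + (1))" using h10 h11 by linarith
  have u1_1: "((0)) \<le> ((-1)*R4 + (1)*mG + (1))" using h15 by linarith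
  have ub1: "mD \<le> ((-1)*R4 + (1)*mG + (1))" unfolding mD_def by (rule max.boundedI[OF u1_0 u1_1])
  have u2_0: "((1)*R1 + (1)*R3 + (-1)*mE + (-1)*mF + (-1)*mG + (-2)) \<le> ((-1/2)*R2 + (-1/2)*mE + (-3/2)*mF + (-1)*mG + (2))" using h9 h12 by linarith
  have u2_1: "((0)) \<le> ((-1/2)*R2 + (-1/2)*mE + (-3/2)*mF + (-1)*mG + (2))" using h16 by linarith
  have ub2: "mD \<le> ((-1/2)*R2 + (-1/2)*mE + (-3/2)*mF + (-1)*mG + (2))" unfolding mD_def by (rule max.boundedI[OF u2_0 u2_1])
  have u3_0: "((1)*R1 + (1)*R3 + (-1)*mE + (-1)*mF + (-1)*mG + (-2)) \<le> ((-1/2)*R2 + (-1)*R4 + (1/2)*mE + (-1/2)*mF + (1)*mG + (2))" using h10 h12 by linarith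
  have u3_1: "((0)) \<le> ((-1/2)*R2 + (-1)*R4 + (1/2)*mE + (-1/2)*mF + (1)*mG + (2))" using h17 by linarith
  have ub3: "mD \<le> ((-1/2)*R2 + (-1)*R4 + (1/2)*mE + (-1/2)*mF + (1)*mG + (2))" unfolding mD_def by (rule max.boundedI[OF u3_0 u3_1])
  have u4_0: "((1)*R1 + (1)*R3 + (-1)*mE + (-1)*mF + (-1)*mG + (-2)) \<le> ((-1)*R2 + (-1)*R5 + (-1)*mE + (-2)*mF + (-2)*mG + (4))" using h9 h13 by linarith
  have u4_1: "((0)) \<le> ((-1)*R2 + (-1)*R5 + (-1)*mE + (-2)*mF + (-2)*mG + (4))" using h18 by linarith
  have ub4: "mD \<le> ((-1)*R2 + (-1)*R5 + (-1)*mE + (-2)*mF + (-2)*mG + (4))" unfolding mD_def by (rule max.boundedI[OF u4_0 u4_1])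
  have u5_0: "((1)*R1 + (1)*R3 + (-1)*mE + (-1)*mF + (-1)*mG + (-2)) \<le> ((-1)*R2 + (-1)*R4 + (-1)*R5 + (-1)*mF + (4))" using h10 h13 by linarith
  have u5_1: "((0)) \<le> ((-1)*R2 + (-1)*R4 + (-1)*R5 + (-1)*mF + (4))" using h19 by linarith
  have ub5: "mD \<le> ((-1)*R2 + (-1)*R4 + (-1)*R5 + (-1)*mF + (4))" unfolding mD_def by (rule max.boundedI[OF u5_0 u5_1])
  have lb0: "((1)*R1 + (1)*R3 + (-1)*mE + (-1)*mF + (-1)*mG + (-2)) \<le> mD" unfolding mD_def by (simp only: max.cobounded1 max.coboundedI2)
  have lbz: "0 \<le> mD" unfolding mD_def by (simp only: max.cobounded1 max.coboundedI2 order.refl)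
  show ?thesis
    apply (rule exI[of _ mD])
    apply (intro conjI)
    subgoal using lbz by linarith
    subgoal using h0 by linarith
    subgoal using h1 by linarith
    subgoal using h2 by linarith
    subgoal using h3 by linarith
    subgoal using h4 by linarith
    subgoal using h5 by linarith
    subgoal using h6 by linarith
    subgoal using h7 by linarith
    subgoal using h8 by linarith
    subgoal using h9 by linarith
    subgoal using lb0 by linarith
    subgoal using h10 by linarith
    subgoal using ub0 by linarith
    subgoal using h11 by linarith
    subgoal using ub1 by linarith
    subgoal using ub2 by linarith
    subgoal using h12 by linarith
    subgoal using ub3 by linarith
    subgoal using ub4 by linarith
    subgoal using h13 by linarith
    subgoal using ub5 by linarith
    done
qed

lemma step2:
  fixes R1 R2 R3 R4 R5 mD mE mF mG :: real
  assumes h0: "0 \<le> mD"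
    and h1: "0 \<le> mE"
    and h2: "0 \<le> mF"
    and h3: "0 \<le> mG"
    and h4: "0 \<le> R1"
    and h5: "0 \<le> R2"
    and h6: "0 \<le> R3"
    and h7: "0 \<le> R4"
    and h8: "0 \<le> R5"
    and h9: "R5 + mE + mG \<le> 1"
    and h10: "R3 + mF + mG \<le> 2"
    and h11: "R1 + R3 \<le> mD + mE + mF + mG + 2"
    and h12: "R3 + R4 \<le> mE + mG + 2"
    and h13: "mD + mE + mF + mG \<le> 1"
    and h14: "R1 \<le> mF + mG + 1"
    and h15: "R4 + mD \<le> mG + 1"
    and h16: "R2 + 2*mD + mE + 3*mF + 2*mG \<le> 4"
    and h17: "2*R1 + R2 \<le> mE + mF + 2*mG + 4"
    and h18: "R2 + 2*R4 + 2*mD + mF \<le> mE + 2*mG + 4"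
    and h19: "R2 + R5 + mD + mE + 2*mF + 2*mG \<le> 4"
    and h20: "R1 + R2 + R5 \<le> 4"
    and h21: "R2 + R4 + R5 + mD + mF \<le> 4"
  shows "\<exists>mC. 0 \<le> mC \<and> 0 \<le> mD \<and> 0 \<le> mE \<and> 0 \<le> mF \<and> 0 \<le> mG \<and> R1 \<le> mC + mD + mE + 2*mF + 2*mG \<and> R4 \<le> mC + mE + mF + 2*mG \<and> 0 \<le> R1 \<and> 0 \<le> R2 \<and> 0 \<le> R3 \<and> 0 \<le> R4 \<and> 0 \<le> R5 \<and> R3 + mC + mF + mG \<le> 2 \<and> mC + mD + mE + mF + mG \<le> 1 \<and> R2 + 2*mC + 2*mD + mE + 3*mF + 2*mG \<le> 4 \<and> R5 + mE + mG \<le> 1 \<and> R2 + R5 + mC + mD + mE + 2*mF + 2*mG \<le> 4"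
proof -
  define mC where "mC = max ((1)*R1 + (-1)*mD + (-1)*mE + (-2)*mF + (-2)*mG + (0)) (max ((1)*R4 + (-1)*mE + (-1)*mF + (-2)*mG + (0)) (0))"
  have u0_0: "((1)*R1 + (-1)*mD + (-1)*mE + (-2)*mF + (-2)*mG + (0)) \<le> ((-1)*R3 + (-1)*mF + (-1)*mG + (2))" using h11 by linarith
  have u0_1: "((1)*R4 + (-1)*mE + (-1)*mF + (-2)*mG + (0)) \<le> ((-1)*R3 + (-1)*mF + (-1)*mG + (2))" using h12 by linarith
  have u0_2: "((0)) \<le> ((-1)*R3 + (-1)*mF + (-1)*mG + (2))" using h10 by linarith
  have ub0: "mC \<le> ((-1)*R3 + (-1)*mF + (-1)*mG + (2))" unfolding mC_def by (rule max.boundedI[OF u0_0 max.boundedI[OF u0_1 u0_2]])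
  have u1_0: "((1)*R1 + (-1)*mD + (-1)*mE + (-2)*mF + (-2)*mG + (0)) \<le> ((-1)*mD + (-1)*mE + (-1)*mF + (-1)*mG + (1))" using h14 by linarith
  have u1_1: "((1)*R4 + (-1)*mE + (-1)*mF + (-2)*mG + (0)) \<le> ((-1)*mD + (-1)*mE + (-1)*mF + (-1)*mG + (1))" using h15 by linarith
  have u1_2: "((0)) \<le> ((-1)*mD + (-1)*mE + (-1)*mF + (-1)*mG + (1))" using h13 by linarith
  have ub1: "mC \<le> ((-1)*mD + (-1)*mE + (-1)*mF + (-1)*mG + (1))" unfolding mC_def by (rule max.boundedI[OF u1_0 max.boundedI[OF u1_1 u1_2]])
  have u2_0: "((1)*R1 + (-1)*mD + (-1)*mE + (-2)*mF + (-2)*mG + (0)) \<le> ((-1/2)*R2 + (-1)*mD + (-1/2)*mE + (-3/2)*mF + (-1)*mG + (2))" using h17 by linarith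
  have u2_1: "((1)*R4 + (-1)*mE + (-1)*mF + (-2)*mG + (0)) \<le> ((-1/2)*R2 + (-1)*mD + (-1/2)*mE + (-3/2)*mF + (-1)*mG + (2))" using h18 by linarith
  have u2_2: "((0)) \<le> ((-1/2)*R2 + (-1)*mD + (-1/2)*mE + (-3/2)*mF + (-1)*mG + (2))" using h16 by linarith
  have ub2: "mC \<le> ((-1/2)*R2 + (-1)*mD + (-1/2)*mE + (-3/2)*mF + (-1)*mG + (2))" unfolding mC_def by (rule max.boundedI[OF u2_0 max.boundedI[OF u2_1 u2_2]])
  have u3_0: "((1)*R1 + (-1)*mD + (-1)*mE + (-2)*mF + (-2)*mG + (0)) \<le> ((-1)*R2 + (-1)*R5 + (-1)*mD + (-1)*mE + (-2)*mF + (-2)*mG + (4))" using h20 by linarith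
  have u3_1: "((1)*R4 + (-1)*mE + (-1)*mF + (-2)*mG + (0)) \<le> ((-1)*R2 + (-1)*R5 + (-1)*mD + (-1)*mE + (-2)*mF + (-2)*mG + (4))" using h21 by linarith
  have u3_2: "((0)) \<le> ((-1)*R2 + (-1)*R5 + (-1)*mD + (-1)*mE + (-2)*mF + (-2)*mG + (4))" using h19 by linarith
  have ub3: "mC \<le> ((-1)*R2 + (-1)*R5 + (-1)*mD + (-1)*mE + (-2)*mF + (-2)*mG + (4))" unfolding mC_def by (rule max.boundedI[OF u3_0 max.boundedI[OF u3_1 u3_2]])
  have lb0: "((1)*R1 + (-1)*mD + (-1)*mE + (-2)*mF + (-2)*mG + (0)) \<le> mC" unfolding mC_def by (simp only: max.cobounded1 max.coboundedI2)
  have lb1: "((1)*R4 + (-1)*mE + (-1)*mF + (-2)*mG + (0)) \<le> mC" unfolding mC_def by (simp only: max.cobounded1 max.coboundedI2)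
  have lbz: "0 \<le> mC" unfolding mC_def by (simp only: max.cobounded1 max.coboundedI2 order.refl)
  show ?thesis
    apply (rule exI[of _ mC])
    apply (intro conjI)
    subgoal using lbz by linarith
    subgoal using h0 by linarith
    subgoal using h1 by linarith
    subgoal using h2 by linarith
    subgoal using h3 by linarith
    subgoal using lb0 by linarith
    subgoal using lb1 by linarith
    subgoal using h4 by linarith
    subgoal using h5 by linarith
    subgoal using h6 by linarith
    subgoal using h7 by linarith
    subgoal using h8 by linarith
    subgoal using ub0 by linarith
    subgoal using ub1 by linarith
    subgoal using ub2 by linarith
    subgoal using h9 by linarith
    subgoal using ub3 by linarith
    done
qed

lemma step1:
  fixes R1 R2 R3 R4 R5 mC mD mE mF mG :: real
  assumes h0: "0 \<le> mC"
    and h1: "0 \<le> mD"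
    and h2: "0 \<le> mE"
    and h3: "0 \<le> mF"
    and h4: "0 \<le> mG"
    and h5: "R1 \<le> mC + mD + mE + 2*mF + 2*mG"
    and h6: "R4 \<le> mC + mE + mF + 2*mG"
    and h7: "0 \<le> R1"
    and h8: "0 \<le> R2"
    and h9: "0 \<le> R3"
    and h10: "0 \<le> R4"
    and h11: "0 \<le> R5"
    and h12: "R3 + mC + mF + mG \<le> 2"
    and h13: "mC + mD + mE + mF + mG \<le> 1"
    and h14: "R2 + 2*mC + 2*mD + mE + 3*mF + 2*mG \<le> 4"
    and h15: "R5 + mE + mG \<le> 1"
    and h16: "R2 + R5 + mC + mD + mE + 2*mF + 2*mG \<le> 4"
  shows "\<exists>mB. 0 \<le> mB \<and> 0 \<le> mC \<and> 0 \<le> mD \<and> 0 \<le> mE \<and> 0 \<le> mF \<and> 0 \<le> mG \<and> R1 \<le> mC + mD + mE + 2*mF + 2*mG \<and> R4 \<le> mC + mE + mF + 2*mG \<and> 0 \<le> R1 \<and> 0 \<le> R2 \<and> 0 \<le> R3 \<and> 0 \<le> R4 \<and> 0 \<le> R5 \<and> mB + mC + mD + mE + mF + mG \<le> 1 \<and> R2 + mC + mD + 2*mF + mG \<le> mB + 3 \<and> R3 + mC + mF + mG \<le> 2 \<and> R5 + mB + mE + mG \<le> 1"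
proof -
  define mB where "mB = max ((1)*R2 + (1)*mC + (1)*mD + (2)*mF + (1)*mG + (-3)) (0)"
  have u0_0: "((1)*R2 + (1)*mC + (1)*mD + (2)*mF + (1)*mG + (-3)) \<le> ((-1)*mC + (-1)*mD + (-1)*mE + (-1)*mF + (-1)*mG + (1))" using h14 by linarith
  have u0_1: "((0)) \<le> ((-1)*mC + (-1)*mD + (-1)*mE + (-1)*mF + (-1)*mG + (1))" using h13 by linarith
  have ub0: "mB \<le> ((-1)*mC + (-1)*mD + (-1)*mE + (-1)*mF + (-1)*mG + (1))" unfolding mB_def by (rule max.boundedI[OF u0_0 u0_1])
  have u1_0: "((1)*R2 + (1)*mC + (1)*mD + (2)*mF + (1)*mG + (-3)) \<le> ((-1)*R5 + (-1)*mE + (-1)*mG + (1))" using h16 by linarith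
  have u1_1: "((0)) \<le> ((-1)*R5 + (-1)*mE + (-1)*mG + (1))" using h15 by linarith
  have ub1: "mB \<le> ((-1)*R5 + (-1)*mE + (-1)*mG + (1))" unfolding mB_def by (rule max.boundedI[OF u1_0 u1_1])
  have lb0: "((1)*R2 + (1)*mC + (1)*mD + (2)*mF + (1)*mG + (-3)) \<le> mB" unfolding mB_def by (simp only: max.cobounded1 max.coboundedI2)
  have lbz: "0 \<le> mB" unfolding mB_def by (simp only: max.cobounded1 max.coboundedI2 order.refl)
  show ?thesis
    apply (rule exI[of _ mB])
    apply (intro conjI)
    subgoal using lbz by linarith
    subgoal using h0 by linarith
    subgoal using h1 by linarith
    subgoal using h2 by linarith
    subgoal using h3 by linarith
    subgoal using h4 by linarith
    subgoal using h5 by linarith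
    subgoal using h6 by linarith
    subgoal using h7 by linarith
    subgoal using h8 by linarith
    subgoal using h9 by linarith
    subgoal using h10 by linarith
    subgoal using h11 by linarith
    subgoal using ub0 by linarith
    subgoal using lb0 by linarith
    subgoal using h12 by linarith
    subgoal using ub1 by linarith
    done
qed

lemma step0:
  fixes R1 R2 R3 R4 R5 mB mC mD mE mF mG :: real
  assumes h0: "0 \<le> mB"
    and h1: "0 \<le> mC"
    and h2: "0 \<le> mD"
    and h3: "0 \<le> mE"
    and h4: "0 \<le> mF"
    and h5: "0 \<le> mG"
    and h6: "R1 \<le> mC + mD + mE + 2*mF + 2*mG"
    and h7: "R4 \<le> mC + mE + mF + 2*mG"
    and h8: "0 \<le> R1"
    and h9: "0 \<le> R2"
    and h10: "0 \<le> R3"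
    and h11: "0 \<le> R4"
    and h12: "0 \<le> R5"
    and h13: "mB + mC + mD + mE + mF + mG \<le> 1"
    and h14: "R2 + mC + mD + 2*mF + mG \<le> mB + 3"
    and h15: "R3 + mC + mF + mG \<le> 2"
    and h16: "R5 + mB + mE + mG \<le> 1"
  shows "\<exists>mA. 0 \<le> mA \<and> 0 \<le> mB \<and> 0 \<le> mC \<and> 0 \<le> mD \<and> 0 \<le> mE \<and> 0 \<le> mF \<and> 0 \<le> mG \<and> mA + mB + mC + mD + mE + mF + mG \<le> 1 \<and> R1 \<le> mC + mD + mE + 2*mF + 2*mG \<and> R2 \<le> 3*mA + 4*mB + 2*mC + 2*mD + 3*mE + mF + 2*mG \<and> R3 \<le> 2*mA + 2*mB + mC + 2*mD + 2*mE + mF + mG \<and> R4 \<le> mC + mE + mF + 2*mG \<and> R5 \<le> mA + mC + mD + mF \<and> 0 \<le> R1 \<and> 0 \<le> R2 \<and> 0 \<le> R3 \<and> 0 \<le> R4 \<and> 0 \<le> R5"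
proof -
  define mA where "mA = max ((1/3)*R2 + (-4/3)*mB + (-2/3)*mC + (-2/3)*mD + (-1)*mE + (-1/3)*mF + (-2/3)*mG + (0)) (max ((1/2)*R3 + (-1)*mB + (-1/2)*mC + (-1)*mD + (-1)*mE + (-1/2)*mF + (-1/2)*mG + (0)) (max ((1)*R5 + (-1)*mC + (-1)*mD + (-1)*mF + (0)) (0)))"
  have u0_0: "((1/3)*R2 + (-4/3)*mB + (-2/3)*mC + (-2/3)*mD + (-1)*mE + (-1/3)*mF + (-2/3)*mG + (0)) \<le> ((-1)*mB + (-1)*mC + (-1)*mD + (-1)*mE + (-1)*mF + (-1)*mG + (1))" using h14 by linarith
  have u0_1: "((1/2)*R3 + (-1)*mB + (-1/2)*mC + (-1)*mD + (-1)*mE + (-1/2)*mF + (-1/2)*mG + (0)) \<le> ((-1)*mB + (-1)*mC + (-1)*mD + (-1)*mE + (-1)*mF + (-1)*mG + (1))" using h15 by linarith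
  have u0_2: "((1)*R5 + (-1)*mC + (-1)*mD + (-1)*mF + (0)) \<le> ((-1)*mB + (-1)*mC + (-1)*mD + (-1)*mE + (-1)*mF + (-1)*mG + (1))" using h16 by linarith
  have u0_3: "((0)) \<le> ((-1)*mB + (-1)*mC + (-1)*mD + (-1)*mE + (-1)*mF + (-1)*mG + (1))" using h13 by linarith
  have ub0: "mA \<le> ((-1)*mB + (-1)*mC + (-1)*mD + (-1)*mE + (-1)*mF + (-1)*mG + (1))" unfolding mA_def by (rule max.boundedI[OF u0_0 max.boundedI[OF u0_1 max.boundedI[OF u0_2 u0_3]]])
  have lb0: "((1/3)*R2 + (-4/3)*mB + (-2/3)*mC + (-2/3)*mD + (-1)*mE + (-1/3)*mF + (-2/3)*mG + (0)) \<le> mA" unfolding mA_def by (simp only: max.cobounded1 max.coboundedI2)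
  have lb1: "((1/2)*R3 + (-1)*mB + (-1/2)*mC + (-1)*mD + (-1)*mE + (-1/2)*mF + (-1/2)*mG + (0)) \<le> mA" unfolding mA_def by (simp only: max.cobounded1 max.coboundedI2)
  have lb2: "((1)*R5 + (-1)*mC + (-1)*mD + (-1)*mF + (0)) \<le> mA" unfolding mA_def by (simp only: max.cobounded1 max.coboundedI2)
  have lbz: "0 \<le> mA" unfolding mA_def by (simp only: max.cobounded1 max.coboundedI2 order.refl)
  show ?thesis
    apply (rule exI[of _ mA])
    apply (intro conjI)
    subgoal using lbz by linarith
    subgoal using h0 by linarith
    subgoal using h1 by linarith
    subgoal using h2 by linarith
    subgoal using h3 by linarith
    subgoal using h4 by linarith
    subgoal using h5 by linarith
    subgoal using ub0 by linarith
    subgoal using h6 by linarith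
    subgoal using lb0 by linarith
    subgoal using lb1 by linarith
    subgoal using h7 by linarith
    subgoal using lb2 by linarith
    subgoal using h8 by linarith
    subgoal using h9 by linarith
    subgoal using h10 by linarith
    subgoal using h11 by linarith
    subgoal using h12 by linarith
    done
qed
lemma decomp:
  fixes R1 R2 R3 R4 R5 :: real
  assumes "0 \<le> R1"
    and "0 \<le> R2"
    and "0 \<le> R3"
    and "0 \<le> R4"
    and "0 \<le> R5"
    and "R1 + R2 + R5 \<le> 4"
    and "R3 + R4 + R5 \<le> 3"
    and "R1 + R3 \<le> 3"
    and "R2 + R4 + R5 \<le> 4"
    and "R1 \<le> 2"
    and "R5 \<le> 1"
    and "R4 + R5 \<le> 2"
    and "R3 \<le> 2"
  shows "\<exists>mA mB mC mD mE mF mG. 0 \<le> mA \<and> 0 \<le> mB \<and> 0 \<le> mC \<and> 0 \<le> mD \<and> 0 \<le> mE \<and> 0 \<le> mF \<and> 0 \<le> mG \<and> mA + mB + mC + mD + mE + mF + mG \<le> 1 \<and> R1 \<le> mC + mD + mE + 2*mF + 2*mG \<and> R2 \<le> 3*mA + 4*mB + 2*mC + 2*mD + 3*mE + mF + 2*mG \<and> R3 \<le> 2*mA + 2*mB + mC + 2*mD + 2*mE + mF + mG \<and> R4 \<le> mC + mE + mF + 2*mG \<and> R5 \<le> mA + mC + mD + mF \<and> 0 \<le> R1 \<and> 0 \<le> R2 \<and> 0 \<le> R3 \<and> 0 \<le> R4 \<and> 0 \<le> R5"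
proof -
  obtain mG where s6: "0 \<le> mG \<and> 0 \<le> R1 \<and> 0 \<le> R2 \<and> 0 \<le> R3 \<and> 0 \<le> R4 \<and> 0 \<le> R5 \<and> R1 + R2 + R5 \<le> 4 \<and> R4 \<le> mG + 1 \<and> R5 + mG \<le> 1 \<and> R3 + R4 + R5 \<le> 3 \<and> R3 + mG \<le> 2 \<and> R1 + R3 \<le> 3 \<and> R2 + R4 + R5 \<le> 4 \<and> R1 \<le> 2 \<and> 2*R1 + R2 \<le> mG + 5 \<and> R2 + R5 + 2*mG \<le> 4" using step6[OF assms] ..
  have "\<exists>mF. 0 \<le> mF \<and> 0 \<le> mG \<and> 0 \<le> R1 \<and> 0 \<le> R2 \<and> 0 \<le> R3 \<and> 0 \<le> R4 \<and> 0 \<le> R5 \<and> R3 + mF + mG \<le> 2 \<and> R1 \<le> mF + mG + 1 \<and> R1 + R2 + R5 \<le> 4 \<and> R4 \<le> mG + 1 \<and> R2 + R4 + R5 + mF \<le> 4 \<and> R5 + mG \<le> 1 \<and> R3 + R4 + R5 \<le> 3 \<and> mF + mG \<le> 1 \<and> R2 + 3*mF + 2*mG \<le> 4 \<and> R1 + R2 + mF \<le> 4 \<and> R2 + R4 + 2*mF \<le> 4 \<and> R2 + R5 + 2*mF + 2*mG \<le> 4" using s6 apply (elim conjE) apply (rule step5) by assumption+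
  then obtain mF where s5: "0 \<le> mF \<and> 0 \<le> mG \<and> 0 \<le> R1 \<and> 0 \<le> R2 \<and> 0 \<le> R3 \<and> 0 \<le> R4 \<and> 0 \<le> R5 \<and> R3 + mF + mG \<le> 2 \<and> R1 \<le> mF + mG + 1 \<and> R1 + R2 + R5 \<le> 4 \<and> R4 \<le> mG + 1 \<and> R2 + R4 + R5 + mF \<le> 4 \<and> R5 + mG \<le> 1 \<and> R3 + R4 + R5 \<le> 3 \<and> mF + mG \<le> 1 \<and> R2 + 3*mF + 2*mG \<le> 4 \<and> R1 + R2 + mF \<le> 4 \<and> R2 + R4 + 2*mF \<le> 4 \<and> R2 + R5 + 2*mF + 2*mG \<le> 4" ..
  have "\<exists>mE. 0 \<le> mE \<and> 0 \<le> mF \<and> 0 \<le> mG \<and> 0 \<le> R1 \<and> 0 \<le> R2 \<and> 0 \<le> R3 \<and> 0 \<le> R4 \<and> 0 \<le> R5 \<and> R5 + mE + mG \<le> 1 \<and> R3 + mF + mG \<le> 2 \<and> R3 + R4 \<le> mE + mG + 2 \<and> R1 \<le> mF + mG + 1 \<and> 2*R1 + R2 \<le> mE + mF + 2*mG + 4 \<and> R1 + R2 + R5 \<le> 4 \<and> mE + mF + mG \<le> 1 \<and> R4 \<le> mG + 1 \<and> R2 + mE + 3*mF + 2*mG \<le> 4 \<and> R2 + 2*R4 + mF \<le> mE + 2*mG + 4 \<and> R2 + R5 + mE + 2*mF + 2*mG \<le> 4 \<and> R2 + R4 + R5 + mF \<le> 4" using s5 apply (elim conjE) apply (rule step4) by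 assumption+
  then obtain mE where s4: "0 \<le> mE \<and> 0 \<le> mF \<and> 0 \<le> mG \<and> 0 \<le> R1 \<and> 0 \<le> R2 \<and> 0 \<le> R3 \<and> 0 \<le> R4 \<and> 0 \<le> R5 \<and> R5 + mE + mG \<le> 1 \<and> R3 + mF + mG \<le> 2 \<and> R3 + R4 \<le> mE + mG + 2 \<and> R1 \<le> mF + mG + 1 \<and> 2*R1 + R2 \<le> mE + mF + 2*mG + 4 \<and> R1 + R2 + R5 \<le> 4 \<and> mE + mF + mG \<le> 1 \<and> R4 \<le> mG + 1 \<and> R2 + mE + 3*mF + 2*mG \<le> 4 \<and> R2 + 2*R4 + mF \<le> mE + 2*mG + 4 \<and> R2 + R5 + mE + 2*mF + 2*mG \<le> 4 \<and> R2 + R4 + R5 + mF \<le> 4" ..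
  have "\<exists>mD. 0 \<le> mD \<and> 0 \<le> mE \<and> 0 \<le> mF \<and> 0 \<le> mG \<and> 0 \<le> R1 \<and> 0 \<le> R2 \<and> 0 \<le> R3 \<and> 0 \<le> R4 \<and> 0 \<le> R5 \<and> R5 + mE + mG \<le> 1 \<and> R3 + mF + mG \<le> 2 \<and> R1 + R3 \<le> mD + mE + mF + mG + 2 \<and> R3 + R4 \<le> mE + mG + 2 \<and> mD + mE + mF + mG \<le> 1 \<and> R1 \<le> mF + mG + 1 \<and> R4 + mD \<le> mG + 1 \<and> R2 + 2*mD + mE + 3*mF + 2*mG \<le> 4 \<and> 2*R1 + R2 \<le> mE + mF + 2*mG + 4 \<and> R2 + 2*R4 + 2*mD + mF \<le> mE + 2*mG + 4 \<and> R2 + R5 + mD + mE + 2*mF + 2*mG \<le> 4 \<and> R1 + R2 + R5 \<le> 4 \<and> R2 + R4 + R5 + mD + mF \<le> 4" using s4 apply (elim conjE) apply (rule step3) by assumption+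
  then obtain mD where s3: "0 \<le> mD \<and> 0 \<le> mE \<and> 0 \<le> mF \<and> 0 \<le> mG \<and> 0 \<le> R1 \<and> 0 \<le> R2 \<and> 0 \<le> R3 \<and> 0 \<le> R4 \<and> 0 \<le> R5 \<and> R5 + mE + mG \<le> 1 \<and> R3 + mF + mG \<le> 2 \<and> R1 + R3 \<le> mD + mE + mF + mG + 2 \<and> R3 + R4 \<le> mE + mG + 2 \<and> mD + mE + mF + mG \<le> 1 \<and> R1 \<le> mF + mG + 1 \<and> R4 + mD \<le> mG + 1 \<and> R2 + 2*mD + mE + 3*mF + 2*mG \<le> 4 \<and> 2*R1 + R2 \<le> mE + mF + 2*mG + 4 \<and> R2 + 2*R4 + 2*mD + mF \<le> mE + 2*mG + 4 \<and> R2 + R5 + mD + mE + 2*mF + 2*mG \<le> 4 \<and> R1 + R2 + R5 \<le> 4 \<and> R2 + R4 + R5 + mD + mF \<le> 4" ..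
  have "\<exists>mC. 0 \<le> mC \<and> 0 \<le> mD \<and> 0 \<le> mE \<and> 0 \<le> mF \<and> 0 \<le> mG \<and> R1 \<le> mC + mD + mE + 2*mF + 2*mG \<and> R4 \<le> mC + mE + mF + 2*mG \<and> 0 \<le> R1 \<and> 0 \<le> R2 \<and> 0 \<le> R3 \<and> 0 \<le> R4 \<and> 0 \<le> R5 \<and> R3 + mC + mF + mG \<le> 2 \<and> mC + mD + mE + mF + mG \<le> 1 \<and> R2 + 2*mC + 2*mD + mE + 3*mF + 2*mG \<le> 4 \<and> R5 + mE + mG \<le> 1 \<and> R2 + R5 + mC + mD + mE + 2*mF + 2*mG \<le> 4" using s3 apply (elim conjE) apply (rule step2) by assumption+
  then obtain mC where s2: "0 \<le> mC \<and> 0 \<le> mD \<and> 0 \<le> mE \<and> 0 \<le> mF \<and> 0 \<le> mG \<and> R1 \<le> mC + mD + mE + 2*mF + 2*mG \<and> R4 \<le> mC + mE + mF + 2*mG \<and> 0 \<le> R1 \<and> 0 \<le> R2 \<and> 0 \<le> R3 \<and> 0 \<le> R4 \<and> 0 \<le> R5 \<and> R3 + mC + mF + mG \<le> 2 \<and> mC + mD + mE + mF + mG \<le> 1 \<and> R2 + 2*mC + 2*mD + mE + 3*mF + 2*mG \<le> 4 \<and> R5 + mE + mG \<le> 1 \<and> R2 + R5 + mC + mD + mE + 2*mF + 2*mG \<le> 4" ..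
  have "\<exists>mB. 0 \<le> mB \<and> 0 \<le> mC \<and> 0 \<le> mD \<and> 0 \<le> mE \<and> 0 \<le> mF \<and> 0 \<le> mG \<and> R1 \<le> mC + mD + mE + 2*mF + 2*mG \<and> R4 \<le> mC + mE + mF + 2*mG \<and> 0 \<le> R1 \<and> 0 \<le> R2 \<and> 0 \<le> R3 \<and> 0 \<le> R4 \<and> 0 \<le> R5 \<and> mB + mC + mD + mE + mF + mG \<le> 1 \<and> R2 + mC + mD + 2*mF + mG \<le> mB + 3 \<and> R3 + mC + mF + mG \<le> 2 \<and> R5 + mB + mE + mG \<le> 1" using s2 apply (elim conjE) apply (rule step1) by assumption+
  then obtain mB where s1: "0 \<le> mB \<and> 0 \<le> mC \<and> 0 \<le> mD \<and> 0 \<le> mE \<and> 0 \<le> mF \<and> 0 \<le> mG \<and> R1 \<le> mC + mD + mE + 2*mF + 2*mG \<and> R4 \<le> mC + mE + mF + 2*mG \<and> 0 \<le> R1 \<and> 0 \<le> R2 \<and> 0 \<le> R3 \<and> 0 \<le> R4 \<and> 0 \<le> R5 \<and> mB + mC + mD + mE + mF + mG \<le> 1 \<and> R2 + mC + mD + 2*mF + mG \<le> mB + 3 \<and> R3 + mC + mF + mG \<le> 2 \<and> R5 + mB + mE + mG \<le> 1" ..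
  have "\<exists>mA. 0 \<le> mA \<and> 0 \<le> mB \<and> 0 \<le> mC \<and> 0 \<le> mD \<and> 0 \<le> mE \<and> 0 \<le> mF \<and> 0 \<le> mG \<and> mA + mB + mC + mD + mE + mF + mG \<le> 1 \<and> R1 \<le> mC + mD + mE + 2*mF + 2*mG \<and> R2 \<le> 3*mA + 4*mB + 2*mC + 2*mD + 3*mE + mF + 2*mG \<and> R3 \<le> 2*mA + 2*mB + mC + 2*mD + 2*mE + mF + mG \<and> R4 \<le> mC + mE + mF + 2*mG \<and> R5 \<le> mA + mC + mD + mF \<and> 0 \<le> R1 \<and> 0 \<le> R2 \<and> 0 \<le> R3 \<and> 0 \<le> R4 \<and> 0 \<le> R5" using s1 apply (elim conjE) apply (rule step0) by assumption+
  then obtain mA where s0: "0 \<le> mA \<and> 0 \<le> mB \<and> 0 \<le> mC \<and> 0 \<le> mD \<and> 0 \<le> mE \<and> 0 \<le> mF \<and> 0 \<le> mG \<and> mA + mB + mC + mD + mE + mF + mG \<le> 1 \<and> R1 \<le> mC + mD + mE + 2*mF + 2*mG \<and> R2 \<le> 3*mA + 4*mB + 2*mC + 2*mD + 3*mE + mF + 2*mG \<and> R3 \<le> 2*mA + 2*mB + mC + 2*mD + 2*mE + mF + mG \<and> R4 \<le> mC + mE + mF + 2*mG \<and> R5 \<le> mA + mC + mD + mF \<and> 0 \<le> R1 \<and> 0 \<le> R2 \<and> 0 \<le> R3 \<and> 0 \<le> R4 \<and> 0 \<le> R5" ..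
  show ?thesis by (rule exI[of _ mA], rule exI[of _ mB], rule exI[of _ mC], rule exI[of _ mD], rule exI[of _ mE], rule exI[of _ mF], rule exI[of _ mG], rule s0)
qed

lemma vc_f: "valid_code 5 4 S6 (\<lambda>k. 1) A6 n R f g \<Longrightarrow> k \<in> {1..4} \<Longrightarrow> \<forall>i\<in>S6 k. m i = m' i \<Longrightarrow> f k m = f k m'"
  unfolding valid_code_def by blast

lemma vc_dec: "valid_code 5 4 S6 (\<lambda>k. 1) A6 n R f g \<Longrightarrow> j \<in> {1..5} \<Longrightarrow> \<forall>k\<in>{1..4}. f k m = f k m' \<Longrightarrow>
   \<forall>i\<in>A6 j. m i = m' i \<Longrightarrow> \<forall>j\<in>{1..5}. g j (\<lambda>k. f k m) m = m j \<Longrightarrow> \<forall>j\<in>{1..5}. g j (\<lambda>k. f k m') m' = m' j \<Longrightarrow> m j = m' j"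
proof -
  assume V: "valid_code 5 4 S6 (\<lambda>k. 1) A6 n R f g" and j: "j \<in> {1..5}" and fk: "\<forall>k\<in>{1..4}. f k m = f k m'"
    and a: "\<forall>i\<in>A6 j. m i = m' i" and G: "\<forall>j\<in>{1..5}. g j (\<lambda>k. f k m) m = m j" and G': "\<forall>j\<in>{1..5}. g j (\<lambda>k. f k m') m' = m' j"
  have C: "\<forall>j\<in>{1..5}. \<forall>l l' m m'. (\<forall>k\<in>{1..4}. l k = l' k) \<and> (\<forall>i\<in>A6 j. m i = m' i) \<longrightarrow> g j l m = g j l' m'"
    using V unfolding valid_code_def by blast
  have D: "\<forall>l l' m m'. (\<forall>k\<in>{1..4}. l k = l' k) \<and> (\<forall>i\<in>A6 j. m i = m' i) \<longrightarrow> g j l m = g j l' m'"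
    using C j by blast
  have "g j (\<lambda>k. f k m) m = g j (\<lambda>k. f k m') m'"
    using D[THEN spec[of _ "\<lambda>k. f k m"], THEN spec[of _ "\<lambda>k. f k m'"], THEN spec[of _ m], THEN spec[of _ m']] fk a by simp
  then show "m j = m' j" using G G' j by simp
qed

lemma msg_eq: "m \<in> msg_set 5 n R \<Longrightarrow> m' \<in> msg_set 5 n R \<Longrightarrow> m 1 = m' 1 \<Longrightarrow> m 2 = m' 2 \<Longrightarrow> m 3 = m' 3
  \<Longrightarrow> m 4 = m' 4 \<Longrightarrow> m 5 = m' 5 \<Longrightarrow> m = m'"
  unfolding msg_set_def
proof (intro ext)
  fix j assume "m \<in> {m. (\<forall>j\<in>{1..5}. m j < 2 ^ nat \<lfloor>real n * R j\<rfloor>) \<and> (\<forall>j. j \<notin> {1..5} \<longrightarrow> m j = 0)}"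
    "m' \<in> {m. (\<forall>j\<in>{1..5}. m j < 2 ^ nat \<lfloor>real n * R j\<rfloor>) \<and> (\<forall>j. j \<notin> {1..5} \<longrightarrow> m j = 0)}"
    "m 1 = m' 1" "m 2 = m' 2" "m 3 = m' 3" "m 4 = m' 4" "m 5 = m' 5"
  note h = this
  show "m j = m' j"
  proof (cases "j \<in> {1..5}")
    case True
    then have "j = 1 \<or> j = 2 \<or> j = 3 \<or> j = 4 \<or> j = 5" by (rule j5)
    then show ?thesis using h by (elim disjE) simp_all
  next
    case False
    then show ?thesis using h by simp
  qed
qed

lemma k4: "k \<in> {1..4::nat} \<Longrightarrow> k = 1 \<or> k = 2 \<or> k = 3 \<or> k = 4" by auto

lemma fall: fixes f :: "nat \<Rightarrow> 'a \<Rightarrow> 'b" assumes "f 1 m = f 1 m'" "f 2 m = f 2 m'" "f 3 m = f 3 m'" "f 4 m = f 4 m'" shows "\<forall>k\<in>{1..4}. f k m = f k m'"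
proof
  fix k :: nat assume "k \<in> {1..4}"
  then have "k = 1 \<or> k = 2 \<or> k = 3 \<or> k = 4" by (rule k4)
  then show "f k m = f k m'" using assms by (elim disjE) simp_all
qed

lemma bound1:
  assumes A: "achievable 5 4 S6 (\<lambda>k. 1) A6 R"
  shows "R 1 \<le> 2"
proof -
  have "(\<Sum>j\<in>{1}. R j) \<le> real (card ({1,3}::nat set))"
  proof (rule conv_generic[OF A])
    fix n :: nat and f :: "nat \<Rightarrow> (nat \<Rightarrow> nat) \<Rightarrow> nat" and g :: "nat \<Rightarrow> (nat \<Rightarrow> nat) \<Rightarrow> (nat \<Rightarrow> nat) \<Rightarrow> nat" and m m' :: "nat \<Rightarrow> nat"
    assume V: "valid_code 5 4 S6 (\<lambda>k. 1) A6 n R f g" and M: "m \<in> msg_set 5 n R" "m' \<in> msg_set 5 n R"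
      and G: "\<forall>j\<in>{1..5}. g j (\<lambda>k. f k m) m = m j" "\<forall>j\<in>{1..5}. g j (\<lambda>k. f k m') m' = m' j"
      and a: "\<forall>j\<in>{1..5}-{1}. m j = m' j" and b: "\<forall>k\<in>{1,3}. f k m = f k m'"
    have a2: "m 2 = m' 2" "m 3 = m' 3" "m 4 = m' 4" "m 5 = m' 5" using a by auto
    have fb: "f 1 m = f 1 m'" "f 3 m = f 3 m'" using b by auto
    have f2: "f 2 m = f 2 m'" by (rule vc_f[where f=f and g=g and n=n and R=R, OF V]) (use a2 in \<open>auto simp: S6_def\<close>)
    have f4: "f 4 m = f 4 m'" by (rule vc_f[where f=f and g=g and n=n and R=R, OF V]) (use a2 in \<open>auto simp: S6_def\<close>)
    note F = fall[of f m m', OF fb(1) f2 fb(2) f4]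
    have m1: "m 1 = m' 1" by (rule vc_dec[where f=f and g=g and n=n and R=R and j=1 and m=m and m'=m', OF V _ F _ G(1) G(2)]) (use a2 in \<open>auto simp: A6_def\<close>)
    show "m = m'" by (rule msg_eq[OF M m1 a2(1) a2(2) a2(3) a2(4)])
  qed auto
  then show ?thesis by simp
qed

lemma bound2:
  assumes A: "achievable 5 4 S6 (\<lambda>k. 1) A6 R"
  shows "R 3 \<le> 2"
proof -
  have "(\<Sum>j\<in>{3}. R j) \<le> real (card ({1,2}::nat set))"
  proof (rule conv_generic[OF A])
    fix n :: nat and f :: "nat \<Rightarrow> (nat \<Rightarrow> nat) \<Rightarrow> nat" and g :: "nat \<Rightarrow> (nat \<Rightarrow> nat) \<Rightarrow> (nat \<Rightarrow> nat) \<Rightarrow> nat" and m m' :: "nat \<Rightarrow> nat"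
    assume V: "valid_code 5 4 S6 (\<lambda>k. 1) A6 n R f g" and M: "m \<in> msg_set 5 n R" "m' \<in> msg_set 5 n R"
      and G: "\<forall>j\<in>{1..5}. g j (\<lambda>k. f k m) m = m j" "\<forall>j\<in>{1..5}. g j (\<lambda>k. f k m') m' = m' j"
      and a: "\<forall>j\<in>{1..5}-{3}. m j = m' j" and b: "\<forall>k\<in>{1,2}. f k m = f k m'"
    have a2: "m 1 = m' 1" "m 2 = m' 2" "m 4 = m' 4" "m 5 = m' 5" using a by auto
    have fb: "f 1 m = f 1 m'" "f 2 m = f 2 m'" using b by auto
    have f3: "f 3 m = f 3 m'" by (rule vc_f[where f=f and g=g and n=n and R=R, OF V]) (use a2 in \<open>auto simp: S6_def\<close>)
    have f4: "f 4 m = f 4 m'" by (rule vc_f[where f=f and g=g and n=n and R=R, OF V]) (use a2 in \<open>auto simp: S6_def\<close>)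
    note F = fall[of f m m', OF fb(1) fb(2) f3 f4]
    have m3: "m 3 = m' 3" by (rule vc_dec[where f=f and g=g and n=n and R=R and j=3 and m=m and m'=m', OF V _ F _ G(1) G(2)]) (use a2 in \<open>auto simp: A6_def\<close>)
    show "m = m'" by (rule msg_eq[OF M a2(1) a2(2) m3 a2(3) a2(4)])
  qed auto
  then show ?thesis by simp
qed

lemma bound3:
  assumes A: "achievable 5 4 S6 (\<lambda>k. 1) A6 R"
  shows "R 5 \<le> 1"
proof -
  have "(\<Sum>j\<in>{5}. R j) \<le> real (card ({4}::nat set))"
  proof (rule conv_generic[OF A])
    fix n :: nat and f :: "nat \<Rightarrow> (nat \<Rightarrow> nat) \<Rightarrow> nat" and g :: "nat \<Rightarrow> (nat \<Rightarrow> nat) \<Rightarrow> (nat \<Rightarrow> nat) \<Rightarrow> nat" and m m' :: "nat \<Rightarrow> nat"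
    assume V: "valid_code 5 4 S6 (\<lambda>k. 1) A6 n R f g" and M: "m \<in> msg_set 5 n R" "m' \<in> msg_set 5 n R"
      and G: "\<forall>j\<in>{1..5}. g j (\<lambda>k. f k m) m = m j" "\<forall>j\<in>{1..5}. g j (\<lambda>k. f k m') m' = m' j"
      and a: "\<forall>j\<in>{1..5}-{5}. m j = m' j" and b: "\<forall>k\<in>{4}. f k m = f k m'"
    have a2: "m 1 = m' 1" "m 2 = m' 2" "m 3 = m' 3" "m 4 = m' 4" using a by auto
    have fb: "f 4 m = f 4 m'" using b by auto
    have f1: "f 1 m = f 1 m'" by (rule vc_f[where f=f and g=g and n=n and R=R, OF V]) (use a2 in \<open>auto simp: S6_def\<close>)
    have f2: "f 2 m = f 2 m'" by (rule vc_f[where f=f and g=g and n=n and R=R, OF V]) (use a2 in \<open>auto simp: S6_def\<close>)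
    have f3: "f 3 m = f 3 m'" by (rule vc_f[where f=f and g=g and n=n and R=R, OF V]) (use a2 in \<open>auto simp: S6_def\<close>)
    note F = fall[of f m m', OF f1 f2 f3 fb(1)]
    have m5: "m 5 = m' 5" by (rule vc_dec[where f=f and g=g and n=n and R=R and j=5 and m=m and m'=m', OF V _ F _ G(1) G(2)]) (use a2 in \<open>auto simp: A6_def\<close>)
    show "m = m'" by (rule msg_eq[OF M a2(1) a2(2) a2(3) a2(4) m5])
  qed auto
  then show ?thesis by simp
qed

lemma bound4:
  assumes A: "achievable 5 4 S6 (\<lambda>k. 1) A6 R"
  shows "R 1 + R 3 \<le> 3"
proof -
  have "(\<Sum>j\<in>{1,3}. R j) \<le> real (card ({1,2,3}::nat set))"
  proof (rule conv_generic[OF A])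
    fix n :: nat and f :: "nat \<Rightarrow> (nat \<Rightarrow> nat) \<Rightarrow> nat" and g :: "nat \<Rightarrow> (nat \<Rightarrow> nat) \<Rightarrow> (nat \<Rightarrow> nat) \<Rightarrow> nat" and m m' :: "nat \<Rightarrow> nat"
    assume V: "valid_code 5 4 S6 (\<lambda>k. 1) A6 n R f g" and M: "m \<in> msg_set 5 n R" "m' \<in> msg_set 5 n R"
      and G: "\<forall>j\<in>{1..5}. g j (\<lambda>k. f k m) m = m j" "\<forall>j\<in>{1..5}. g j (\<lambda>k. f k m') m' = m' j"
      and a: "\<forall>j\<in>{1..5}-{1,3}. m j = m' j" and b: "\<forall>k\<in>{1,2,3}. f k m = f k m'"
    have a2: "m 2 = m' 2" "m 4 = m' 4" "m 5 = m' 5" using a by auto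
    have fb: "f 1 m = f 1 m'" "f 2 m = f 2 m'" "f 3 m = f 3 m'" using b by auto
    have f4: "f 4 m = f 4 m'" by (rule vc_f[where f=f and g=g and n=n and R=R, OF V]) (use a2 in \<open>auto simp: S6_def\<close>)
    note F = fall[of f m m', OF fb(1) fb(2) fb(3) f4]
    have m1: "m 1 = m' 1" by (rule vc_dec[where f=f and g=g and n=n and R=R and j=1 and m=m and m'=m', OF V _ F _ G(1) G(2)]) (use a2 in \<open>auto simp: A6_def\<close>)
    have m3: "m 3 = m' 3" by (rule vc_dec[where f=f and g=g and n=n and R=R and j=3 and m=m and m'=m', OF V _ F _ G(1) G(2)]) (use a2 m1 in \<open>auto simp: A6_def\<close>)
    show "m = m'" by (rule msg_eq[OF M m1 a2(1) m3 a2(2) a2(3)])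
  qed auto
  then show ?thesis by simp
qed

lemma bound5:
  assumes A: "achievable 5 4 S6 (\<lambda>k. 1) A6 R"
  shows "R 4 + R 5 \<le> 2"
proof -
  have "(\<Sum>j\<in>{4,5}. R j) \<le> real (card ({2,4}::nat set))"
  proof (rule conv_generic[OF A])
    fix n :: nat and f :: "nat \<Rightarrow> (nat \<Rightarrow> nat) \<Rightarrow> nat" and g :: "nat \<Rightarrow> (nat \<Rightarrow> nat) \<Rightarrow> (nat \<Rightarrow> nat) \<Rightarrow> nat" and m m' :: "nat \<Rightarrow> nat"
    assume V: "valid_code 5 4 S6 (\<lambda>k. 1) A6 n R f g" and M: "m \<in> msg_set 5 n R" "m' \<in> msg_set 5 n R"
      and G: "\<forall>j\<in>{1..5}. g j (\<lambda>k. f k m) m = m j" "\<forall>j\<in>{1..5}. g j (\<lambda>k. f k m') m' = m' j"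
      and a: "\<forall>j\<in>{1..5}-{4,5}. m j = m' j" and b: "\<forall>k\<in>{2,4}. f k m = f k m'"
    have a2: "m 1 = m' 1" "m 2 = m' 2" "m 3 = m' 3" using a by auto
    have fb: "f 2 m = f 2 m'" "f 4 m = f 4 m'" using b by auto
    have f1: "f 1 m = f 1 m'" by (rule vc_f[where f=f and g=g and n=n and R=R, OF V]) (use a2 in \<open>auto simp: S6_def\<close>)
    have f3: "f 3 m = f 3 m'" by (rule vc_f[where f=f and g=g and n=n and R=R, OF V]) (use a2 in \<open>auto simp: S6_def\<close>)
    note F = fall[of f m m', OF f1 fb(1) f3 fb(2)]
    have m5: "m 5 = m' 5" by (rule vc_dec[where f=f and g=g and n=n and R=R and j=5 and m=m and m'=m', OF V _ F _ G(1) G(2)]) (use a2 in \<open>auto simp: A6_def\<close>)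
    have m4: "m 4 = m' 4" by (rule vc_dec[where f=f and g=g and n=n and R=R and j=4 and m=m and m'=m', OF V _ F _ G(1) G(2)]) (use a2 m5 in \<open>auto simp: A6_def\<close>)
    show "m = m'" by (rule msg_eq[OF M a2(1) a2(2) a2(3) m4 m5])
  qed auto
  then show ?thesis by simp
qed

lemma bound6:
  assumes A: "achievable 5 4 S6 (\<lambda>k. 1) A6 R"
  shows "R 1 + R 2 + R 5 \<le> 4"
proof -
  have "(\<Sum>j\<in>{1,2,5}. R j) \<le> real (card ({1,2,3,4}::nat set))"
  proof (rule conv_generic[OF A])
    fix n :: nat and f :: "nat \<Rightarrow> (nat \<Rightarrow> nat) \<Rightarrow> nat" and g :: "nat \<Rightarrow> (nat \<Rightarrow> nat) \<Rightarrow> (nat \<Rightarrow> nat) \<Rightarrow> nat" and m m' :: "nat \<Rightarrow> nat"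
    assume V: "valid_code 5 4 S6 (\<lambda>k. 1) A6 n R f g" and M: "m \<in> msg_set 5 n R" "m' \<in> msg_set 5 n R"
      and G: "\<forall>j\<in>{1..5}. g j (\<lambda>k. f k m) m = m j" "\<forall>j\<in>{1..5}. g j (\<lambda>k. f k m') m' = m' j"
      and a: "\<forall>j\<in>{1..5}-{1,2,5}. m j = m' j" and b: "\<forall>k\<in>{1,2,3,4}. f k m = f k m'"
    have a2: "m 3 = m' 3" "m 4 = m' 4" using a by auto
    have fb: "f 1 m = f 1 m'" "f 2 m = f 2 m'" "f 3 m = f 3 m'" "f 4 m = f 4 m'" using b by auto
    note F = fall[of f m m', OF fb(1) fb(2) fb(3) fb(4)]
    have m5: "m 5 = m' 5" by (rule vc_dec[where f=f and g=g and n=n and R=R and j=5 and m=m and m'=m', OF V _ F _ G(1) G(2)]) (use a2 in \<open>auto simp: A6_def\<close>)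
    have m1: "m 1 = m' 1" by (rule vc_dec[where f=f and g=g and n=n and R=R and j=1 and m=m and m'=m', OF V _ F _ G(1) G(2)]) (use a2 m5 in \<open>auto simp: A6_def\<close>)
    have m2: "m 2 = m' 2" by (rule vc_dec[where f=f and g=g and n=n and R=R and j=2 and m=m and m'=m', OF V _ F _ G(1) G(2)]) (use a2 m5 m1 in \<open>auto simp: A6_def\<close>)
    show "m = m'" by (rule msg_eq[OF M m1 m2 a2(1) a2(2) m5])
  qed auto
  then show ?thesis by simp
qed

lemma bound7:
  assumes A: "achievable 5 4 S6 (\<lambda>k. 1) A6 R"
  shows "R 2 + R 4 + R 5 \<le> 4"
proof -
  have "(\<Sum>j\<in>{2,4,5}. R j) \<le> real (card ({1,2,3,4}::nat set))"
  proof (rule conv_generic[OF A])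
    fix n :: nat and f :: "nat \<Rightarrow> (nat \<Rightarrow> nat) \<Rightarrow> nat" and g :: "nat \<Rightarrow> (nat \<Rightarrow> nat) \<Rightarrow> (nat \<Rightarrow> nat) \<Rightarrow> nat" and m m' :: "nat \<Rightarrow> nat"
    assume V: "valid_code 5 4 S6 (\<lambda>k. 1) A6 n R f g" and M: "m \<in> msg_set 5 n R" "m' \<in> msg_set 5 n R"
      and G: "\<forall>j\<in>{1..5}. g j (\<lambda>k. f k m) m = m j" "\<forall>j\<in>{1..5}. g j (\<lambda>k. f k m') m' = m' j"
      and a: "\<forall>j\<in>{1..5}-{2,4,5}. m j = m' j" and b: "\<forall>k\<in>{1,2,3,4}. f k m = f k m'"
    have a2: "m 1 = m' 1" "m 3 = m' 3" using a by auto
    have fb: "f 1 m = f 1 m'" "f 2 m = f 2 m'" "f 3 m = f 3 m'" "f 4 m = f 4 m'" using b by auto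
    note F = fall[of f m m', OF fb(1) fb(2) fb(3) fb(4)]
    have m5: "m 5 = m' 5" by (rule vc_dec[where f=f and g=g and n=n and R=R and j=5 and m=m and m'=m', OF V _ F _ G(1) G(2)]) (use a2 in \<open>auto simp: A6_def\<close>)
    have m2: "m 2 = m' 2" by (rule vc_dec[where f=f and g=g and n=n and R=R and j=2 and m=m and m'=m', OF V _ F _ G(1) G(2)]) (use a2 m5 in \<open>auto simp: A6_def\<close>)
    have m4: "m 4 = m' 4" by (rule vc_dec[where f=f and g=g and n=n and R=R and j=4 and m=m and m'=m', OF V _ F _ G(1) G(2)]) (use a2 m5 m2 in \<open>auto simp: A6_def\<close>)
    show "m = m'" by (rule msg_eq[OF M a2(1) m2 a2(2) m4 m5])
  qed auto
  then show ?thesis by simp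
qed

lemma bound8:
  assumes A: "achievable 5 4 S6 (\<lambda>k. 1) A6 R"
  shows "R 3 + R 4 + R 5 \<le> 3"
proof -
  have "(\<Sum>j\<in>{3,4,5}. R j) \<le> real (card ({1,2,4}::nat set))"
  proof (rule conv_generic[OF A])
    fix n :: nat and f :: "nat \<Rightarrow> (nat \<Rightarrow> nat) \<Rightarrow> nat" and g :: "nat \<Rightarrow> (nat \<Rightarrow> nat) \<Rightarrow> (nat \<Rightarrow> nat) \<Rightarrow> nat" and m m' :: "nat \<Rightarrow> nat"
    assume V: "valid_code 5 4 S6 (\<lambda>k. 1) A6 n R f g" and M: "m \<in> msg_set 5 n R" "m' \<in> msg_set 5 n R"
      and G: "\<forall>j\<in>{1..5}. g j (\<lambda>k. f k m) m = m j" "\<forall>j\<in>{1..5}. g j (\<lambda>k. f k m') m' = m' j"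
      and a: "\<forall>j\<in>{1..5}-{3,4,5}. m j = m' j" and b: "\<forall>k\<in>{1,2,4}. f k m = f k m'"
    have a2: "m 1 = m' 1" "m 2 = m' 2" using a by auto
    have fb: "f 1 m = f 1 m'" "f 2 m = f 2 m'" "f 4 m = f 4 m'" using b by auto
    have f3: "f 3 m = f 3 m'" by (rule vc_f[where f=f and g=g and n=n and R=R, OF V]) (use a2 in \<open>auto simp: S6_def\<close>)
    note F = fall[of f m m', OF fb(1) fb(2) f3 fb(3)]
    have m3: "m 3 = m' 3" by (rule vc_dec[where f=f and g=g and n=n and R=R and j=3 and m=m and m'=m', OF V _ F _ G(1) G(2)]) (use a2 in \<open>auto simp: A6_def\<close>)
    have m5: "m 5 = m' 5" by (rule vc_dec[where f=f and g=g and n=n and R=R and j=5 and m=m and m'=m', OF V _ F _ G(1) G(2)]) (use a2 m3 in \<open>auto simp: A6_def\<close>)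
    have m4: "m 4 = m' 4" by (rule vc_dec[where f=f and g=g and n=n and R=R and j=4 and m=m and m'=m', OF V _ F _ G(1) G(2)]) (use a2 m3 m5 in \<open>auto simp: A6_def\<close>)
    show "m = m'" by (rule msg_eq[OF M a2(1) a2(2) m3 m4 m5])
  qed auto
  then show ?thesis by simp
qed

lemma closed_coord_eq: "closed {R :: nat \<Rightarrow> real. P \<longrightarrow> R j = 0}"
proof (cases P)
  case True
  have "closed {R :: nat \<Rightarrow> real. R j = 0}"
    by (rule closed_Collect_eq) (simp_all add: continuous_on_const)
  then show ?thesis using True by simp
next
  case False then show ?thesis by simp
qed
lemma closed_coord_ge: "closed {R :: nat \<Rightarrow> real. P \<longrightarrow> 0 \<le> R j}"
proof (cases P)
  case True
  have "closed {R :: nat \<Rightarrow> real. 0 \<le> R j}"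
    by (rule closed_Collect_le) (simp_all add: continuous_on_const)
  then show ?thesis using True by simp
next
  case False then show ?thesis by simp
qed
lemma closed_reg: "closed {R :: nat \<Rightarrow> real. (\<forall>j. j \<notin> {1..5} \<longrightarrow> R j = 0) \<and> (\<forall>j\<in>{1..5}. 0 \<le> R j) \<and>
        R 1 \<le> 2 \<and> R 3 \<le> 2 \<and> R 5 \<le> 1 \<and> R 1 + R 3 \<le> 3 \<and> R 4 + R 5 \<le> 2 \<and>
        R 1 + R 2 + R 5 \<le> 4 \<and> R 2 + R 4 + R 5 \<le> 4 \<and> R 3 + R 4 + R 5 \<le> 3}"
  apply (intro closed_Collect_conj closed_Collect_all closed_coord_eq)
  apply (simp_all only: Ball_def)
  apply (intro closed_Collect_all)
  apply (rule closed_coord_ge)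
  apply (rule closed_Collect_le; intro continuous_intros continuous_on_product_coordinates)+
  done

theorem mainTheorem6:
  shows "capacity_region 5 4 S6 (\<lambda>k. 1) A6 =
    {R. (\<forall>j. j \<notin> {1..5} \<longrightarrow> R j = 0) \<and> (\<forall>j\<in>{1..5}. 0 \<le> R j) \<and>
        R 1 \<le> 2 \<and> R 3 \<le> 2 \<and> R 5 \<le> 1 \<and> R 1 + R 3 \<le> 3 \<and> R 4 + R 5 \<le> 2 \<and>
        R 1 + R 2 + R 5 \<le> 4 \<and> R 2 + R 4 + R 5 \<le> 4 \<and> R 3 + R 4 + R 5 \<le> 3}"
  (is "_ = ?Reg")
proof -
  have ach_sub: "{R. achievable 5 4 S6 (\<lambda>k. 1) A6 R} \<subseteq> ?Reg"
  proof
    fix R assume "R \<in> {R. achievable 5 4 S6 (\<lambda>k. 1) A6 R}"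
    then have A: "achievable 5 4 S6 (\<lambda>k. 1) A6 R" by simp
    from A have s: "\<forall>j. j \<notin> {1..5} \<longrightarrow> R j = 0" and n: "\<forall>j. 0 \<le> R j" unfolding achievable_def by auto
    show "R \<in> ?Reg" using s n bound1[OF A] bound2[OF A] bound3[OF A] bound4[OF A] bound5[OF A]
      bound6[OF A] bound7[OF A] bound8[OF A] by auto
  qed
  have sub1: "capacity_region 5 4 S6 (\<lambda>k. 1) A6 \<subseteq> ?Reg"
    unfolding capacity_region_def by (rule closure_minimal[OF ach_sub closed_reg])
  have sub2: "?Reg \<subseteq> capacity_region 5 4 S6 (\<lambda>k. 1) A6"
  proof
    fix R assume R: "R \<in> ?Reg"
    then have supp: "\<forall>j. j \<notin> {1..5} \<longrightarrow> R j = 0" and nn: "\<forall>j\<in>{1..5}. 0 \<le> R j"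
      and c: "R 1 \<le> 2" "R 3 \<le> 2" "R 5 \<le> 1" "R 1 + R 3 \<le> 3" "R 4 + R 5 \<le> 2"
        "R 1 + R 2 + R 5 \<le> 4" "R 2 + R 4 + R 5 \<le> 4" "R 3 + R 4 + R 5 \<le> 3" by auto
    have R0: "\<forall>j. 0 \<le> R j" using supp nn by (metis order.refl)
    have D: "\<exists>mA mB mC mD mE mF mG. 0 \<le> mA \<and> 0 \<le> mB \<and> 0 \<le> mC \<and> 0 \<le> mD \<and> 0 \<le> mE \<and> 0 \<le> mF \<and> 0 \<le> mG \<and> mA + mB + mC + mD + mE + mF + mG \<le> 1 \<and> R 1 \<le> mC + mD + mE + 2*mF + 2*mG \<and> R 2 \<le> 3*mA + 4*mB + 2*mC + 2*mD + 3*mE + mF + 2*mG \<and> R 3 \<le> 2*mA + 2*mB + mC + 2*mD + 2*mE + mF + mG \<and> R 4 \<le> mC + mE + mF + 2*mG \<and> R 5 \<le> mA + mC + mD + mF \<and> 0 \<le> R 1 \<and> 0 \<le> R 2 \<and> 0 \<le> R 3 \<and> 0 \<le> R 4 \<and> 0 \<le> R 5"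
      by (rule decomp[of "R 1" "R 2" "R 3" "R 4" "R 5"]) (use R0 c in auto)
    from D obtain mA mB mC mD mE mF mG where mu0: "0 \<le> mA \<and> 0 \<le> mB \<and> 0 \<le> mC \<and> 0 \<le> mD \<and> 0 \<le> mE \<and> 0 \<le> mF \<and> 0 \<le> mG \<and> mA + mB + mC + mD + mE + mF + mG \<le> 1 \<and> R 1 \<le> mC + mD + mE + 2*mF + 2*mG \<and> R 2 \<le> 3*mA + 4*mB + 2*mC + 2*mD + 3*mE + mF + 2*mG \<and> R 3 \<le> 2*mA + 2*mB + mC + 2*mD + 2*mE + mF + mG \<and> R 4 \<le> mC + mE + mF + 2*mG \<and> R 5 \<le> mA + mC + mD + mF \<and> 0 \<le> R 1 \<and> 0 \<le> R 2 \<and> 0 \<le> R 3 \<and> 0 \<le> R 4 \<and> 0 \<le> R 5"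
      by (elim exE) (erule that)
    have mu:  "0 \<le> mA" "0 \<le> mB" "0 \<le> mC" "0 \<le> mD" "0 \<le> mE" "0 \<le> mF" "0 \<le> mG"
      "mA + mB + mC + mD + mE + mF + mG \<le> 1"
      "R 1 \<le> mC + mD + mE + 2*mF + 2*mG" "R 2 \<le> 3*mA + 4*mB + 2*mC + 2*mD + 3*mE + mF + 2*mG"
      "R 3 \<le> 2*mA + 2*mB + mC + 2*mD + 2*mE + mF + mG" "R 4 \<le> mC + mE + mF + 2*mG"
      "R 5 \<le> mA + mC + mD + mF"
      using mu0 by blast+
    define h where "h t = (\<lambda>j. t * R j)" for t :: real
    have achh: "achievable 5 4 S6 (\<lambda>k. 1) A6 (h t)" if t: "0 < t" "t < 1" for t
    proof (rule ach[where mA="t*mA" and mB="t*mB" and mC="t*mC" and mD="t*mD" and mE="t*mE" and mF="t*mF" and mG="t*mG"])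
      show "\<forall>j. 0 \<le> h t j" using R0 t unfolding h_def by simp
      show "\<forall>j. j \<notin> {1..5} \<longrightarrow> h t j = 0" using supp unfolding h_def by simp
      show "0 \<le> t*mA" "0 \<le> t*mB" "0 \<le> t*mC" "0 \<le> t*mD" "0 \<le> t*mE" "0 \<le> t*mF" "0 \<le> t*mG"
        using mu t by simp_all
      have "t * (mA + mB + mC + mD + mE + mF + mG) \<le> t * 1" by (rule mult_left_mono[OF mu(8)]) (use t in simp)
      then show "t*mA + t*mB + t*mC + t*mD + t*mE + t*mF + t*mG < 1" using t by (simp add: algebra_simps)
      have t0: "0 \<le> t" using t by simp
      show "h t 1 \<le> t*mC + t*mD + t*mE + 2*(t*mF) + 2*(t*mG)"
        using mult_left_mono[OF mu(9) t0] unfolding h_def by (simp add: algebra_simps)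
      show "h t 2 \<le> 3*(t*mA) + 4*(t*mB) + 2*(t*mC) + 2*(t*mD) + 3*(t*mE) + t*mF + 2*(t*mG)"
        using mult_left_mono[OF mu(10) t0] unfolding h_def by (simp add: algebra_simps)
      show "h t 3 \<le> 2*(t*mA) + 2*(t*mB) + t*mC + 2*(t*mD) + 2*(t*mE) + t*mF + t*mG"
        using mult_left_mono[OF mu(11) t0] unfolding h_def by (simp add: algebra_simps)
      show "h t 4 \<le> t*mC + t*mE + t*mF + 2*(t*mG)"
        using mult_left_mono[OF mu(12) t0] unfolding h_def by (simp add: algebra_simps)
      show "h t 5 \<le> t*mA + t*mC + t*mD + t*mF"
        using mult_left_mono[OF mu(13) t0] unfolding h_def by (simp add: algebra_simps)
    qed
    have cont: "continuous_on UNIV h"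
      unfolding h_def by (intro continuous_on_coordinatewise_then_product continuous_intros)
    have "(h \<longlongrightarrow> h 1) (at 1)" using cont by (simp add: continuous_on_def)
    then have lim: "(h \<longlongrightarrow> h 1) (at_left 1)" by (rule tendsto_mono[OF at_le[OF subset_UNIV]])
    have ev: "eventually (\<lambda>t. h t \<in> {R. achievable 5 4 S6 (\<lambda>k. 1) A6 R}) (at_left (1::real))"
      using eventually_at_left_real[of 0 "1::real"] by (rule eventually_mono) (use achh in auto)
    have "h 1 \<in> closure {R. achievable 5 4 S6 (\<lambda>k. 1) A6 R}"
    proof -
      have nb: "at_left (1::real) \<noteq> bot" by simp
      show ?thesis by (rule Lim_in_closed_set[OF closed_closure eventually_mono[OF ev closure_subset[THEN subsetD]] nb lim])
    qed
    moreover have "h 1 = R" unfolding h_def by simp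
    ultimately show "R \<in> capacity_region 5 4 S6 (\<lambda>k. 1) A6" unfolding capacity_region_def by simp
  qed
  show ?thesis using sub1 sub2 by blast
qed

end
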